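(* Assume $W_c$ satisfies Assumption 2. Then for all integers $k,n\ge2$, \[ \log P_j(k,n)\le\inf_{s\in(0,\frac12]}\left[\frac{-nsR+(n-1)\,U\big[W_s,W_c,\uparrow;\tfrac{k-1}{n-1}\big](s)}{1-s}+\frac{\overline\xi_{W_s}(s)+\overline\xi_{W_c}(s)}{1-s}\right]. \]
   Context: Setup. $\mathcal M$ is a finite set and $W_s=\{W_s(m|m')\}$ an irreducible aperiodic transition matrix on $\mathcal M$; the message $M^k$ has law $P_{M^k}(m^k)=P_{M_1}(m_1)\prod_{i=2}^kW_s(m_i|m_{i-1})$ for an initial distribution $P_{M_1}$. $\mathcal X$ is a finite abelian group, $\mathcal Z$ a finite set, $W_c=\{W_c(x,z|x',z')\}$ an irreducible aperiodic transition matrix on $\mathcal X\times\mathcal Z$, and $(X^n,Z^n)$ has law $P_{X^nZ^n}(x^n,z^n)=P_{X_1Z_1}(x_1,z_1)\prod_{i=2}^nW_c(x_i,z_i|x_{i-1},z_{i-1})$ for an initial distribution $P_{X_1Z_1}$. The channel maps input $\tilde x^n\in\mathcal X^n$ to output $(x^n,z^n)$ with probability $P_{X^nZ^n}(x^n-\tilde x^n,z^n)$. A code is $(\mathsf e,\mathsf d)$ with $\mathsf e:\mathcal M^k\to\mathcal X^n$, $\mathsf d:(\mathcal X\times\mathcal Z)^n\to\mathcal M^k$; $P_j(k,n)$ is the infimum over codes of the average (over $P_{M^k}$) decoding error probability. $R:=\log|\mathcal X|$. Assumption 2: either (i) for every $\theta\in(-\infty,1)$ and $z,z'$, $\sum_xW_c(x,z|x',z')^{1-\theta}$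 does not depend on $x'$, or (ii) $|\mathcal Z|=1$. Either case implies that $W_{c,Z}(z|z'):=\sum_xW_c(x,z|x',z')$ is independent of $x'$. Perron–Frobenius notation: entrywise powers $a^t$ of transition probabilities are taken to be $0$ when $a=0$. For a nonnegative irreducible matrix $A$, $\lambda(A)$ is its Perron–Frobenius eigenvalue and $v_A$ the positive vector with $\sum_iv_A(i)A(i,j)=\lambda(A)v_A(j)$, normalized so $\min_iv_A(i)=1$. Quantities. $\theta H^{W_s}_{1-\theta}(M):=\log\lambda(A^s_\theta)$ with $A^s_\theta(m,m'):=W_s(m|m')^{1-\theta}$. For a transition matrix $V$ on $\mathcal Z$ with $V(z|z')>0$ whenever $W_{c,Z}(z|z')>0$, $H^{W_c|V}_{1-\theta}(X|Z):=\frac1\theta\log\lambda\big(W_c(x,z|x',z')^{1-\theta}V(z|z')^\theta\big)$, and $H^{W_c,\uparrow}_{1-\theta}(X|Z):=\max_VH^{W_c|V}_{1-\theta}(X|Z)$. For $r>0$: $U[W_s,W_c,\uparrow;r](\theta):=r\theta H^{W_s}_{1-\theta}(M)+\theta H^{W_c,\uparrow}_{1-\theta}(X|Z)$. $\overline\xi_{W_s}(\theta):=\log(v_{A^s_\theta}\cdot w^s_\theta)$ with $w^s_\theta(m):=P_{M_1}(m)^{1-\theta}$. If case (i) holds: $K_\theta(z,z'):=\big[\sum_xW_c(x,z|x',z')^{1-\theta}\big]^{\frac1{1-\theta}}$, $w^c_\theta(z):=\big[\sum_xP_{X_1Z_1}(x,z)^{1-\theta}\big]^{\frac1{1-\theta}}$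 and $\overline\xi_{W_c}(\theta):=\log(v_{K_\theta}\cdot w^c_\theta)$. Otherwise ($|\mathcal Z|=1$, $W_c$ viewed as $W_c(x|x')$ on $\mathcal X$): $\overline\xi_{W_c}(\theta):=\log(v_{B_\theta}\cdot w_\theta)$ with $B_\theta(x,x'):=W_c(x|x')^{1-\theta}$, $w_\theta(x):=P_{X_1}(x)^{1-\theta}$. *)

theory Defs
  imports "HOL-Analysis.Analysis"
begin

text \<open>Transition matrices are functions W with W a b = W(a|b) (probability of going
  to a from b).\<close>

definition stochastic :: "('a::finite \<Rightarrow> 'a \<Rightarrow> real) \<Rightarrow> bool" where
  "stochastic W \<longleftrightarrow> (\<forall>a b. 0 \<le> W a b) \<and> (\<forall>b. (\<Sum>a\<in>UNIV. W a b) = 1)"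

definition prob_vec :: "('a::finite \<Rightarrow> real) \<Rightarrow> bool" where
  "prob_vec P \<longleftrightarrow> (\<forall>a. 0 \<le> P a) \<and> (\<Sum>a\<in>UNIV. P a) = 1"

definition step_rel :: "('a \<Rightarrow> 'a \<Rightarrow> real) \<Rightarrow> ('a \<times> 'a) set" where
  "step_rel W = {(b, a). W a b > 0}"

definition irreducible_mat :: "('a::finite \<Rightarrow> 'a \<Rightarrow> real) \<Rightarrow> bool" where
  "irreducible_mat W \<longleftrightarrow> (\<forall>a b. (a, b) \<in> (step_rel W)\<^sup>+)"

definition aperiodic_mat :: "('a::finite \<Rightarrow> 'a \<Rightarrow> real) \<Rightarrow> bool" where
  "aperiodic_mat W \<longleftrightarrow> (\<forall>a. Gcd {n::nat. 0 < n \<and> (a, a) \<in> (step_rel W) ^^ n} = 1)"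

definition irr_aper_chain :: "('a::finite \<Rightarrow> 'a \<Rightarrow> real) \<Rightarrow> bool" where
  "irr_aper_chain W \<longleftrightarrow> stochastic W \<and> irreducible_mat W \<and> aperiodic_mat W"

definition pf_root :: "('a::finite \<Rightarrow> 'a \<Rightarrow> real) \<Rightarrow> real" where
  "pf_root A = (THE r. \<exists>v. (\<forall>i. 0 < v i) \<and> (\<forall>j. (\<Sum>i\<in>UNIV. v i * A i j) = r * v j))"

definition pf_vec :: "('a::finite \<Rightarrow> 'a \<Rightarrow> real) \<Rightarrow> 'a \<Rightarrow> real" where
  "pf_vec A = (THE v. (\<forall>i. 0 < v i) \<and> (\<forall>j. (\<Sum>i\<in>UNIV. v i * A i j) = pf_root A * v j)
                     \<and> Min (range v) = 1)"

definition dotp :: "('a::finite \<Rightarrow> real) \<Rightarrow> ('a \<Rightarrow> real) \<Rightarrow> real" where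
  "dotp v w = (\<Sum>i\<in>UNIV. v i * w i)"

definition markov_prob :: "('a \<Rightarrow> real) \<Rightarrow> ('a \<Rightarrow> 'a \<Rightarrow> real) \<Rightarrow> 'a list \<Rightarrow> real" where
  "markov_prob P1 W xs =
     (case xs of [] \<Rightarrow> 1
      | x # _ \<Rightarrow> P1 x * (\<Prod>i\<in>{1..<length xs}. W (xs ! i) (xs ! (i - 1))))"

text \<open>Average error probability of code (e, d) for block lengths k, n.  The channel
  output (x^n, z^n) has probability P_{X^nZ^n}(x^n - e(m^k), z^n).\<close>
definition code_error ::
  "('m::finite \<Rightarrow> real) \<Rightarrow> ('m \<Rightarrow> 'm \<Rightarrow> real) \<Rightarrow>
   ('x::{finite,ab_group_add} \<times> 'z::finite \<Rightarrow> real) \<Rightarrow> ('x \<times> 'z \<Rightarrow> 'x \<times> 'z \<Rightarrow> real) \<Rightarrow>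
   nat \<Rightarrow> nat \<Rightarrow> ('m list \<Rightarrow> 'x list) \<Rightarrow> (('x \<times> 'z) list \<Rightarrow> 'm list) \<Rightarrow> real" where
  "code_error PM1 Ws PXZ1 Wc k n e d =
     (\<Sum>ms\<in>{ms. length ms = k}. markov_prob PM1 Ws ms *
        (\<Sum>ys\<in>{ys. length ys = n}.
            markov_prob PXZ1 Wc (map2 (\<lambda>(x, z) t. (x - t, z)) ys (e ms)) *
            (if d ys \<noteq> ms then 1 else 0)))"

definition Pj ::
  "('m::finite \<Rightarrow> real) \<Rightarrow> ('m \<Rightarrow> 'm \<Rightarrow> real) \<Rightarrow>
   ('x::{finite,ab_group_add} \<times> 'z::finite \<Rightarrow> real) \<Rightarrow> ('x \<times> 'z \<Rightarrow> 'x \<times> 'z \<Rightarrow> real) \<Rightarrow>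
   nat \<Rightarrow> nat \<Rightarrow> real" where
  "Pj PM1 Ws PXZ1 Wc k n =
     Inf {code_error PM1 Ws PXZ1 Wc k n e d | e d.
            \<forall>ms. length ms = k \<longrightarrow> length (e ms) = n}"

definition assm2_i :: "('x::{finite,ab_group_add} \<times> 'z::finite \<Rightarrow> 'x \<times> 'z \<Rightarrow> real) \<Rightarrow> bool" where
  "assm2_i Wc \<longleftrightarrow> (\<forall>\<theta>::real. \<theta> < 1 \<longrightarrow> (\<forall>z z' x1 x2.
      (\<Sum>x\<in>UNIV. Wc (x, z) (x1, z') powr (1 - \<theta>)) = (\<Sum>x\<in>UNIV. Wc (x, z) (x2, z') powr (1 - \<theta>))))"

definition assm2 :: "('x::{finite,ab_group_add} \<times> 'z::finite \<Rightarrow> 'x \<times> 'z \<Rightarrow> real) \<Rightarrow> bool" where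
  "assm2 Wc \<longleftrightarrow> assm2_i Wc \<or> CARD('z) = 1"

text \<open>Marginal W_{c,Z}(z|z') (independent of x' under Assumption 2; evaluated at x' = 0).\<close>
definition WcZ :: "('x::{finite,ab_group_add} \<times> 'z::finite \<Rightarrow> 'x \<times> 'z \<Rightarrow> real) \<Rightarrow> 'z \<Rightarrow> 'z \<Rightarrow> real" where
  "WcZ Wc z z' = (\<Sum>x\<in>UNIV. Wc (x, z) (0, z'))"

text \<open>theta * H^{W_s}_{1-theta}(M) = log lambda(A^s_theta).\<close>
definition As :: "('m \<Rightarrow> 'm \<Rightarrow> real) \<Rightarrow> real \<Rightarrow> 'm \<Rightarrow> 'm \<Rightarrow> real" where
  "As Ws \<theta> m m' = Ws m m' powr (1 - \<theta>)"

definition thetaH_s :: "('m::finite \<Rightarrow> 'm \<Rightarrow> real) \<Rightarrow> real \<Rightarrow> real" where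
  "thetaH_s Ws \<theta> = ln (pf_root (As Ws \<theta>))"

definition H_cond_V ::
  "('x::{finite,ab_group_add} \<times> 'z::finite \<Rightarrow> 'x \<times> 'z \<Rightarrow> real) \<Rightarrow> ('z \<Rightarrow> 'z \<Rightarrow> real) \<Rightarrow> real \<Rightarrow> real" where
  "H_cond_V Wc V \<theta> =
     (1 / \<theta>) * ln (pf_root (\<lambda>(x, z) (x', z'). Wc (x, z) (x', z') powr (1 - \<theta>) * V z z' powr \<theta>))"

definition admissible_V :: "('x::{finite,ab_group_add} \<times> 'z::finite \<Rightarrow> 'x \<times> 'z \<Rightarrow> real) \<Rightarrow> ('z \<Rightarrow> 'z \<Rightarrow> real) \<Rightarrow> bool" where
  "admissible_V Wc V \<longleftrightarrow> stochastic V \<and> (\<forall>z z'. WcZ Wc z z' > 0 \<longrightarrow> V z z' > 0)"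

definition H_up :: "('x::{finite,ab_group_add} \<times> 'z::finite \<Rightarrow> 'x \<times> 'z \<Rightarrow> real) \<Rightarrow> real \<Rightarrow> real" where
  "H_up Wc \<theta> = (SUP V \<in> {V. admissible_V Wc V}. H_cond_V Wc V \<theta>)"

definition U_up ::
  "('m::finite \<Rightarrow> 'm \<Rightarrow> real) \<Rightarrow> ('x::{finite,ab_group_add} \<times> 'z::finite \<Rightarrow> 'x \<times> 'z \<Rightarrow> real) \<Rightarrow>
   real \<Rightarrow> real \<Rightarrow> real" where
  "U_up Ws Wc r \<theta> = r * thetaH_s Ws \<theta> + \<theta> * H_up Wc \<theta>"

definition xi_s :: "('m::finite \<Rightarrow> real) \<Rightarrow> ('m \<Rightarrow> 'm \<Rightarrow> real) \<Rightarrow> real \<Rightarrow> real" where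
  "xi_s PM1 Ws \<theta> = ln (dotp (pf_vec (As Ws \<theta>)) (\<lambda>m. PM1 m powr (1 - \<theta>)))"

definition K_mat :: "('x::{finite,ab_group_add} \<times> 'z::finite \<Rightarrow> 'x \<times> 'z \<Rightarrow> real) \<Rightarrow> real \<Rightarrow> 'z \<Rightarrow> 'z \<Rightarrow> real" where
  "K_mat Wc \<theta> z z' = (\<Sum>x\<in>UNIV. Wc (x, z) (0, z') powr (1 - \<theta>)) powr (1 / (1 - \<theta>))"

definition xi_c ::
  "('x::{finite,ab_group_add} \<times> 'z::finite \<Rightarrow> real) \<Rightarrow> ('x \<times> 'z \<Rightarrow> 'x \<times> 'z \<Rightarrow> real) \<Rightarrow> real \<Rightarrow> real" where
  "xi_c PXZ1 Wc \<theta> =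
     (if assm2_i Wc then
        ln (dotp (pf_vec (K_mat Wc \<theta>))
                 (\<lambda>z. (\<Sum>x\<in>UNIV. PXZ1 (x, z) powr (1 - \<theta>)) powr (1 / (1 - \<theta>))))
      else
        (let z0 = (undefined :: 'z) in
         ln (dotp (pf_vec (\<lambda>x x'. Wc (x, z0) (x', z0) powr (1 - \<theta>)))
                  (\<lambda>x. PXZ1 (x, z0) powr (1 - \<theta>)))))"

end

theory Submission
  imports Defs
begin

lemma finite_len: "finite {xs::'a::finite list. length xs = n}"
  using finite_lists_length_eq[of "UNIV::'a set" n] by simp

lemma card_len: "card {xs::'a::finite list. length xs = n} = CARD('a) ^ n"
  using card_lists_length_eq[of "UNIV::'a set" n] by simp

lemma sum_len_Suc:
  "(\<Sum>xs\<in>{xs::'a::finite list. length xs = Suc n}. f xs) =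
   (\<Sum>x\<in>UNIV. \<Sum>xs\<in>{xs. length xs = n}. f (x # xs))"
proof -
  have eq: "{xs::'a list. length xs = Suc n} = case_prod (#) ` (UNIV \<times> {xs. length xs = n})"
    by (auto simp: length_Suc_conv image_iff)
  have inj: "inj_on (case_prod (#)) (UNIV \<times> {xs::'a list. length xs = n})"
    by (auto simp: inj_on_def)
  show ?thesis
    unfolding eq sum.reindex[OF inj]
    by (simp add: sum.cartesian_product split_def)
qed

fun chain :: "('b \<Rightarrow> 'b \<Rightarrow> real) \<Rightarrow> 'b \<Rightarrow> 'b list \<Rightarrow> real" where
  "chain A u [] = 1"
| "chain A u (y # ys) = A y u * chain A y ys"

lemma prod_chain:
  "(\<Prod>i\<in>{1..<Suc (length ys)}. W ((x # ys) ! i) ((x # ys) ! (i - 1))) = chain W x ys"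
proof (induction ys arbitrary: x)
  case Nil
  then show ?case by simp
next
  case (Cons y ys)
  have "(\<Prod>i\<in>{1..<Suc (length (y # ys))}. W ((x # y # ys) ! i) ((x # y # ys) ! (i - 1)))
      = W y x * (\<Prod>i\<in>{Suc 1..<Suc (Suc (length ys))}. W ((x # y # ys) ! i) ((x # y # ys) ! (i - 1)))"
    by (simp add: prod.atLeast_Suc_lessThan)
  also have "(\<Prod>i\<in>{Suc 1..<Suc (Suc (length ys))}. W ((x # y # ys) ! i) ((x # y # ys) ! (i - 1)))
      = (\<Prod>i\<in>{1..<Suc (length ys)}. W ((x # y # ys) ! Suc i) ((x # y # ys) ! (Suc i - 1)))"
    by (rule prod.shift_bounds_Suc_ivl)
  also have "\<dots> = (\<Prod>i\<in>{1..<Suc (length ys)}. W ((y # ys) ! i) ((y # ys) ! (i - 1)))"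
    by (rule prod.cong) (auto simp: nth_Cons split: nat.splits)
  also have "\<dots> = chain W y ys" by (rule Cons.IH)
  finally show ?case by simp
qed

lemma markov_prob_cons: "markov_prob P1 W (x # ys) = P1 x * chain W x ys"
  unfolding markov_prob_def using prod_chain[of W x ys] by simp

lemma chain_nonneg: "(\<And>a b. 0 \<le> A a b) \<Longrightarrow> 0 \<le> chain A u ys"
  by (induction ys arbitrary: u) auto

lemma chain_powr: "(\<And>a b. 0 \<le> A a b) \<Longrightarrow> chain A u ys powr p = chain (\<lambda>a b. A a b powr p) u ys"
proof (induction ys arbitrary: u)
  case Nil then show ?case by simp
next
  case (Cons y ys)
  then show ?case by (simp add: powr_mult chain_nonneg)
qed

lemma chain_mult: "chain (\<lambda>a b. A a b * B a b) u ys = chain A u ys * chain B u ys"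
  by (induction ys arbitrary: u) auto

lemma chain_bound:
  fixes A :: "'b::finite \<Rightarrow> 'b \<Rightarrow> real"
  assumes A: "\<And>a b. 0 \<le> A a b" and ev: "\<And>u. (\<Sum>b\<in>UNIV. A b u * v b) \<le> \<mu> * v u"
    and v1: "\<And>u. 1 \<le> v u" and mu: "0 \<le> \<mu>"
  shows "(\<Sum>ys\<in>{ys. length ys = m}. chain A u ys) \<le> \<mu> ^ m * v u"
proof (induction m arbitrary: u)
  case 0
  then show ?case using v1[of u] by simp
next
  case (Suc m)
  have "(\<Sum>ys\<in>{ys. length ys = Suc m}. chain A u ys)
      = (\<Sum>b\<in>UNIV. A b u * (\<Sum>ys\<in>{ys. length ys = m}. chain A b ys))"
    by (simp add: sum_len_Suc sum_distrib_left)
  also have "\<dots> \<le> (\<Sum>b\<in>UNIV. A b u * (\<mu> ^ m * v b))"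
    by (rule sum_mono) (use Suc A in \<open>auto intro: mult_left_mono\<close>)
  also have "\<dots> = \<mu> ^ m * (\<Sum>b\<in>UNIV. A b u * v b)"
    by (simp add: sum_distrib_left algebra_simps)
  also have "\<dots> \<le> \<mu> ^ m * (\<mu> * v u)"
    by (rule mult_left_mono[OF ev]) (use mu in simp)
  finally show ?case by (simp add: ac_simps)
qed

section \<open>Perron-Frobenius facts\<close>

definition leig :: "('a::finite \<Rightarrow> 'a \<Rightarrow> real) \<Rightarrow> real \<Rightarrow> ('a \<Rightarrow> real) \<Rightarrow> bool" where
  "leig A r v \<longleftrightarrow> (\<forall>i. 0 < v i) \<and> (\<forall>j. (\<Sum>i\<in>UNIV. v i * A i j) = r * v j)"

lemma ex_argmin: "\<exists>j::'a::finite. \<forall>i. (f j :: real) \<le> f i"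
proof -
  have "Min (range f) \<in> range f" by (rule Min_in) auto
  then obtain j where "f j = Min (range f)" by (metis rangeE)
  then have "\<forall>i. f j \<le> f i" by (simp add: Min_le)
  then show ?thesis by blast
qed

lemma ex_argmax: "\<exists>j::'a::finite. \<forall>i. (f i :: real) \<le> f j"
proof -
  have "Max (range f) \<in> range f" by (rule Max_in) auto
  then obtain j where "f j = Max (range f)" by (metis rangeE)
  then have "\<forall>i. f i \<le> f j" by (simp add: Max_ge)
  then show ?thesis by blast
qed

lemma leig_root_ge:
  assumes A: "\<And>a b. 0 \<le> A a b" and 1: "leig A r1 u1" and 2: "leig A r2 u2"
  shows "r2 \<le> r1"
proof -
  obtain j where j: "\<forall>i. u1 j / u2 j \<le> u1 i / u2 i" using ex_argmin[of "\<lambda>i. u1 i / u2 i"] by blast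
  define t where "t = u1 j / u2 j"
  have p1: "\<forall>i. 0 < u1 i" and p2: "\<forall>i. 0 < u2 i" using 1 2 by (auto simp: leig_def)
  have le: "t * u2 i \<le> u1 i" for i
    using j p2 unfolding t_def by (auto simp: field_simps)
  have "u2 j > 0" using p2 by blast
  then have "r2 * u1 j = t * (r2 * u2 j)" unfolding t_def by (simp add: field_simps)
  also have "\<dots> = t * (\<Sum>i\<in>UNIV. u2 i * A i j)" using 2 by (simp add: leig_def)
  also have "\<dots> = (\<Sum>i\<in>UNIV. (t * u2 i) * A i j)" by (simp add: sum_distrib_left algebra_simps)
  also have "\<dots> \<le> (\<Sum>i\<in>UNIV. u1 i * A i j)"
    by (rule sum_mono) (use le A in \<open>auto intro: mult_right_mono\<close>)
  also have "\<dots> = r1 * u1 j" using 1 by (simp add: leig_def)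
  finally show ?thesis using p1 by (simp add: mult_le_cancel_right)
qed

lemma leig_root_unique:
  assumes "\<And>a b. 0 \<le> A a b" "leig A r1 u1" "leig A r2 u2" shows "r1 = r2"
  using leig_root_ge[OF assms] leig_root_ge[OF assms(1,3,2)] by simp

lemma pf_root_eq:
  assumes "\<And>a b. 0 \<le> A a b" "leig A r v" shows "pf_root A = r"
  unfolding pf_root_def
proof (rule the_equality)
  show "\<exists>v. (\<forall>i. 0 < v i) \<and> (\<forall>j. (\<Sum>i\<in>UNIV. v i * A i j) = r * v j)"
    using assms(2) by (auto simp: leig_def)
next
  fix r' assume "\<exists>v. (\<forall>i. 0 < v i) \<and> (\<forall>j. (\<Sum>i\<in>UNIV. v i * A i j) = r' * v j)"
  then obtain v' where "leig A r' v'" by (auto simp: leig_def)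
  then show "r' = r" by (rule leig_root_unique[OF assms(1) _ assms(2)])
qed

definition irred :: "('a::finite \<Rightarrow> 'a \<Rightarrow> real) \<Rightarrow> bool" where
  "irred A \<longleftrightarrow> (\<forall>a b. (a, b) \<in> (step_rel A)\<^sup>+)"

lemma zero_prop:
  fixes A :: "'a::finite \<Rightarrow> 'a \<Rightarrow> real"
  assumes A: "\<And>a b. 0 \<le> A a b" and irr: "irred A" and d: "\<And>i. 0 \<le> d i"
    and ev: "\<And>j. (\<Sum>i\<in>UNIV. d i * A i j) = r * d j" and z: "d j0 = 0"
  shows "d i = 0"
proof -
  have step: "d b = 0" if "d a = 0" "(a, b) \<in> step_rel A" for a b
  proof -
    have "(\<Sum>i\<in>UNIV. d i * A i a) = 0" using ev[of a] that by simp
    then have "\<forall>i\<in>UNIV. d i * A i a = 0"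
      by (subst (asm) sum_nonneg_eq_0_iff) (auto intro: mult_nonneg_nonneg d A)
    then have "d b * A b a = 0" by simp
    moreover have "A b a > 0" using that(2) by (simp add: step_rel_def)
    ultimately show ?thesis by simp
  qed
  have "(j0, i) \<in> (step_rel A)\<^sup>+" using irr by (simp add: irred_def)
  then show ?thesis
    by (induction rule: trancl_induct) (use z step in auto)
qed

lemma leig_root_pos:
  fixes A :: "'a::finite \<Rightarrow> 'a \<Rightarrow> real"
  assumes A: "\<And>a b. 0 \<le> A a b" and irr: "irred A" and l: "leig A r v"
  shows "0 < r"
proof -
  fix j :: 'a
  have "(j, j) \<in> (step_rel A)\<^sup>+" using irr by (simp add: irred_def)
  then obtain i where "(j, i) \<in> step_rel A" by (meson converse_tranclE)
  then have Aij: "A i j > 0" by (simp add: step_rel_def)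
  have pos: "\<forall>i. 0 < v i" using l by (simp add: leig_def)
  have vnn: "\<And>x. 0 \<le> v x" using pos less_imp_le by blast
  have "v i * A i j \<le> (\<Sum>i\<in>UNIV. v i * A i j)"
    by (rule member_le_sum) (use A vnn in \<open>auto intro: mult_nonneg_nonneg\<close>)
  moreover have "0 < v i * A i j" using pos Aij by simp
  ultimately have "0 < r * v j" using l by (simp add: leig_def)
  moreover have "v j > 0" using pos by blast
  ultimately show ?thesis by (simp add: zero_less_mult_iff)
qed

lemma leig_vec_unique:
  fixes A :: "'a::finite \<Rightarrow> 'a \<Rightarrow> real"
  assumes A: "\<And>a b. 0 \<le> A a b" and irr: "irred A" and 1: "leig A r u1" and 2: "leig A r u2"
  shows "\<exists>c>0. \<forall>i. u1 i = c * u2 i"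
proof -
  obtain j where j: "\<forall>i. u1 j / u2 j \<le> u1 i / u2 i" using ex_argmin[of "\<lambda>i. u1 i / u2 i"] by blast
  define t where "t = u1 j / u2 j"
  have p1: "\<forall>i. 0 < u1 i" and p2: "\<forall>i. 0 < u2 i" using 1 2 by (auto simp: leig_def)
  have le: "t * u2 i \<le> u1 i" for i
    using j p2 unfolding t_def by (auto simp: field_simps)
  define d where "d i = u1 i - t * u2 i" for i
  have "d i = 0" for i
  proof (rule zero_prop[OF A irr, of d r j])
    show "0 \<le> d i" for i using le[of i] by (simp add: d_def)
    show "(\<Sum>i\<in>UNIV. d i * A i k) = r * d k" for k
    proof -
      have "(\<Sum>i\<in>UNIV. d i * A i k) = (\<Sum>i\<in>UNIV. u1 i * A i k) - t * (\<Sum>i\<in>UNIV. u2 i * A i k)"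
        unfolding d_def by (simp add: left_diff_distrib sum_subtractf sum_distrib_left mult.assoc)
      also have "\<dots> = r * d k" using 1 2 unfolding d_def leig_def by (simp add: algebra_simps)
      finally show ?thesis .
    qed
    have "u2 j > 0" using p2 by blast
    then show "d j = 0" unfolding d_def t_def by simp
  qed
  then have "\<forall>i. u1 i = t * u2 i" by (simp add: d_def)
  moreover have "t > 0" unfolding t_def using p1 p2 by simp
  ultimately show ?thesis by blast
qed

lemma pf_vec_props:
  fixes A :: "'a::finite \<Rightarrow> 'a \<Rightarrow> real"
  assumes A: "\<And>a b. 0 \<le> A a b" and irr: "irred A" and l: "leig A r v"
  shows "leig A r (pf_vec A)" "\<And>i. 1 \<le> pf_vec A i"
proof -
  have root: "pf_root A = r" by (rule pf_root_eq[OF A l])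
  have pos: "\<forall>i. 0 < v i" using l by (simp add: leig_def)
  obtain j where j: "\<forall>i. v j \<le> v i" using ex_argmin[of v] by blast
  define v' where "v' i = v i / v j" for i
  have l': "leig A r v'"
    using l pos unfolding leig_def v'_def
    by (auto simp: sum_divide_distrib[symmetric] field_simps)
  have v'ge: "1 \<le> v' i" for i using j pos unfolding v'_def by (simp add: field_simps)
  have "v j > 0" using pos by blast
  then have v'j: "v' j = 1" unfolding v'_def by simp
  have minv': "Min (range v') = 1"
    by (rule Min_eqI) (use v'ge v'j in \<open>auto intro: rangeI[of _ j, simplified]\<close>)
  have P: "(\<forall>i. 0 < v' i) \<and> (\<forall>j. (\<Sum>i\<in>UNIV. v' i * A i j) = pf_root A * v' j) \<and> Min (range v') = 1"
    using l' minv' root by (simp add: leig_def)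
  have "pf_vec A = v'"
    unfolding pf_vec_def
  proof (rule the_equality)
    show "(\<forall>i. 0 < v' i) \<and> (\<forall>j. (\<Sum>i\<in>UNIV. v' i * A i j) = pf_root A * v' j) \<and> Min (range v') = 1"
      by (rule P)
  next
    fix w assume w: "(\<forall>i. 0 < w i) \<and> (\<forall>j. (\<Sum>i\<in>UNIV. w i * A i j) = pf_root A * w j) \<and> Min (range w) = 1"
    then have lw: "leig A r w" using root by (simp add: leig_def)
    obtain c where c: "c > 0" "\<forall>i. w i = c * v' i" using leig_vec_unique[OF A irr lw l'] by blast
    have wge: "1 \<le> w i" for i
    proof -
      have "Min (range w) \<le> w i" by (simp add: Min_le)
      then show ?thesis using w by simp
    qed
    have "Min (range w) \<in> range w" by (rule Min_in) auto
    then obtain j' where j': "w j' = 1" using w by auto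
    have e1: "c * v' j' = 1" using j' c by simp
    have "c * 1 \<le> c * v' j'" using c v'ge[of j'] by (intro mult_left_mono) auto
    then have "c \<le> 1" using e1 by simp
    moreover have "1 \<le> c" using wge[of j] c v'j by simp
    ultimately have "c = 1" by simp
    then show "w = v'" using c by auto
  qed
  then show "leig A r (pf_vec A)" "\<And>i. 1 \<le> pf_vec A i" using l' v'ge by auto
qed

lemma pf_exists:
  fixes A :: "'a::finite \<Rightarrow> 'a \<Rightarrow> real"
  assumes A: "\<And>a b. 0 \<le> A a b" and irr: "irred A"
  shows "\<exists>r v. leig A r v"
proof -
  define S :: "(real^'a) set" where "S = {x. (\<forall>i. 0 \<le> x$i) \<and> (\<Sum>i\<in>UNIV. x$i) = 1}"
  define den :: "real^'a \<Rightarrow> real" where "den x = (\<Sum>j\<in>UNIV. \<Sum>i\<in>UNIV. x$i * A i j) + 1" for x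
  define f :: "real^'a \<Rightarrow> real^'a" where
    "f x = (1 / den x) *\<^sub>R (\<chi> j. (\<Sum>i\<in>UNIV. x$i * A i j) + x$j)" for x
  have den1: "1 \<le> den x" if "x \<in> S" for x
    using that A unfolding S_def den_def by (auto intro!: sum_nonneg mult_nonneg_nonneg)
  have "bounded S"
    unfolding bounded_iff
  proof (intro exI ballI)
    fix x assume x: "x \<in> S"
    have "norm x \<le> (\<Sum>i\<in>UNIV. \<bar>x$i\<bar>)" by (rule norm_le_l1_cart)
    also have "\<dots> = 1" using x unfolding S_def by simp
    finally show "norm x \<le> 1" .
  qed
  moreover have "closed S"
  proof -
    have "S = {x::real^'a. \<forall>i. 0 \<le> x$i} \<inter> {x. (\<Sum>i\<in>UNIV. x$i) = 1}"
      unfolding S_def by auto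
    moreover have "closed {x::real^'a. (\<Sum>i\<in>UNIV. x$i) = 1}"
      by (intro closed_Collect_eq continuous_intros)
    ultimately show ?thesis using closed_positive_orthant by auto
  qed
  ultimately have "compact S" by (simp add: compact_eq_bounded_closed)
  moreover have "convex S"
    unfolding convex_def S_def
    by (auto simp: sum.distrib sum_distrib_left[symmetric])
  moreover have "S \<noteq> {}"
  proof -
    have "(\<chi> i. 1 / real CARD('a)) \<in> S" unfolding S_def by simp
    then show ?thesis by blast
  qed
  moreover have "continuous_on S f"
    unfolding f_def den_def
    by (intro continuous_intros) (use den1 in \<open>force simp: den_def\<close>)
  moreover have "f \<in> S \<rightarrow> S"
  proof
    fix x assume x: "x \<in> S"
    have d: "0 < den x" using den1[OF x] by simp
    have "(\<Sum>j\<in>UNIV. (\<Sum>i\<in>UNIV. x$i * A i j) + x$j) = den x"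
      using x unfolding den_def S_def by (simp add: sum.distrib)
    then show "f x \<in> S"
      using x d A unfolding S_def f_def
      by (auto simp: sum_divide_distrib[symmetric] intro!: divide_nonneg_pos add_nonneg_nonneg sum_nonneg mult_nonneg_nonneg)
  qed
  ultimately obtain x where x: "x \<in> S" "f x = x" by (rule brouwer)
  have d: "0 < den x" using den1[OF x(1)] by simp
  have ev: "(\<Sum>i\<in>UNIV. x$i * A i j) = (den x - 1) * x$j" for j
  proof -
    have "f x $ j = x $ j" using x(2) by simp
    then have "((\<Sum>i\<in>UNIV. x$i * A i j) + x$j) / den x = x$j" unfolding f_def by simp
    then have "(\<Sum>i\<in>UNIV. x$i * A i j) + x$j = x$j * den x" using d by (simp add: field_simps)
    then show ?thesis by (simp add: algebra_simps)
  qed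
  have nn: "\<And>i. 0 \<le> x$i" using x(1) unfolding S_def by simp
  have pos: "0 < x$i" for i
  proof (rule ccontr)
    assume "\<not> 0 < x$i"
    then have z: "x$i = 0" using nn[of i] by simp
    have "\<And>k. x$k = 0"
      by (rule zero_prop[OF A irr, of "\<lambda>k. x$k" "den x - 1" i]) (use nn ev z in auto)
    then have "(\<Sum>k\<in>UNIV. x$k) = 0" by simp
    then show False using x(1) unfolding S_def by simp
  qed
  have "leig A (den x - 1) (\<lambda>i. x$i)" unfolding leig_def using pos ev by simp
  then show ?thesis by blast
qed

lemma mult_powr_self: "0 \<le> (x::real) \<Longrightarrow> x * x powr r = x powr (1 + r)"
  by (cases "x = 0") (auto simp: powr_add)

lemma jensen_powr:
  fixes h :: "'e \<Rightarrow> real"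
  assumes E: "finite E" "E \<noteq> {}" and h: "\<And>e. e \<in> E \<Longrightarrow> 0 \<le> h e" and r: "0 < r" "r \<le> 1"
  shows "(\<Sum>e\<in>E. h e powr r) \<le> card E * ((\<Sum>e\<in>E. h e) / card E) powr r"
proof -
  define N where "N = real (card E)"
  have N: "0 < N" using E by (simp add: N_def card_gt_0_iff)
  define a where "a = (\<Sum>e\<in>E. h e) / N"
  have a0: "0 \<le> a" unfolding a_def using h N by (simp add: sum_nonneg)
  show ?thesis
  proof (cases "a = 0")
    case True
    then have "(\<Sum>e\<in>E. h e) = 0" using N unfolding a_def by simp
    then have "\<forall>e\<in>E. h e = 0" using sum_nonneg_eq_0_iff[OF E(1)] h by blast
    then show ?thesis by simp
  next
    case False
    then have apos: "0 < a" using a0 by simp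
    have pt: "h e powr r \<le> a powr r * (r * (h e / a) + (1 - r))" if e: "e \<in> E" for e
    proof (cases "h e = 0")
      case True
      then show ?thesis using apos r by simp
    next
      case False
      then have hp: "0 < h e" using h[OF e] by simp
      have "(h e / a) powr r * 1 powr (1 - r) \<le> r * (h e / a) + (1 - r) * 1"
        by (rule Youngs_inequality_0) (use r hp apos in auto)
      then have "(h e / a) powr r \<le> r * (h e / a) + (1 - r)" by simp
      then have "a powr r * (h e / a) powr r \<le> a powr r * (r * (h e / a) + (1 - r))"
        by (rule mult_left_mono) simp
      moreover have "a powr r * (h e / a) powr r = h e powr r"
        using hp apos by (simp add: powr_divide)
      ultimately show ?thesis by simp
    qed
    have "(\<Sum>e\<in>E. h e powr r) \<le> (\<Sum>e\<in>E. a powr r * (r * (h e / a) + (1 - r)))"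
      by (rule sum_mono) (rule pt)
    also have "\<dots> = a powr r * (\<Sum>e\<in>E. r * (h e / a) + (1 - r))"
      by (simp only: sum_distrib_left)
    also have "(\<Sum>e\<in>E. r * (h e / a) + (1 - r)) = (\<Sum>e\<in>E. r * (h e / a)) + (\<Sum>e\<in>E. (1 - r))"
      by (simp only: sum.distrib)
    also have "(\<Sum>e\<in>E. r * (h e / a)) = r * ((\<Sum>e\<in>E. h e) / a)"
      by (simp only: sum_distrib_left[symmetric] sum_divide_distrib[symmetric])
    also have "(\<Sum>e\<in>E. (1 - r)) = (1 - r) * N" by (simp add: N_def)
    also have "(\<Sum>e\<in>E. h e) / a = N"
    proof -
      have "(\<Sum>e\<in>E. h e) \<noteq> 0" using apos unfolding a_def by auto
      then show ?thesis using N unfolding a_def by simp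
    qed
    also have "a powr r * (r * N + (1 - r) * N) = N * a powr r" by (simp add: algebra_simps)
    finally have "(\<Sum>e\<in>E. h e powr r) \<le> N * a powr r" .
    then show ?thesis by (simp only: a_def N_def)
  qed
qed

lemma sum_PiE_insert:
  assumes "m \<notin> B"
  shows "(\<Sum>e\<in>PiE (insert m B) (\<lambda>_. C). F e) = (\<Sum>c\<in>C. \<Sum>g\<in>PiE B (\<lambda>_. C). F (g(m := c)))"
proof -
  have inj: "inj_on (\<lambda>(y, g). g(m := y)) (C \<times> PiE B (\<lambda>_. C))"
    unfolding inj_on_def
  proof (intro ballI impI)
    fix p q assume p: "p \<in> C \<times> PiE B (\<lambda>_. C)" and q: "q \<in> C \<times> PiE B (\<lambda>_. C)"
      and eq: "(\<lambda>(y, g). g(m := y)) p = (\<lambda>(y, g). g(m := y)) q"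
    obtain y g where pp: "p = (y, g)" by (cases p)
    obtain y' g' where qq: "q = (y', g')" by (cases q)
    have g: "g \<in> PiE B (\<lambda>_. C)" using p pp by simp
    have g': "g' \<in> PiE B (\<lambda>_. C)" using q qq by simp
    have eq': "g(m := y) = g'(m := y')" using eq pp qq by simp
    have "y = y'" using fun_cong[OF eq', of m] by simp
    moreover have "g = g'"
    proof (rule ext)
      fix i show "g i = g' i"
      proof (cases "i = m")
        case True
        have "g m = undefined" using g assms by (rule PiE_arb)
        moreover have "g' m = undefined" using g' assms by (rule PiE_arb)
        ultimately show ?thesis using True by simp
      next
        case False
        have "(g(m := y)) i = (g'(m := y')) i" using eq' by simp
        then show ?thesis using False by simp
      qed
    qed
    ultimately show "p = q" using pp qq by simp
  qed
  show ?thesis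
    unfolding PiE_insert_eq sum.reindex[OF inj] comp_def
    by (subst sum.cartesian_product) (simp add: case_prod_beta)
qed

lemma card_PiE_const: "finite B \<Longrightarrow> card (PiE B (\<lambda>_. C)) = card C ^ card B"
  by (simp add: card_PiE)

lemma sum_PiE_coord:
  assumes B: "finite B" "b \<in> B"
  shows "(\<Sum>g\<in>PiE B (\<lambda>_. C). \<phi> (g b)) = real (card C ^ (card B - 1)) * (\<Sum>c\<in>C. \<phi> c)"
proof -
  obtain B' where BB: "B = insert b B'" "b \<notin> B'" using B(2) by (meson Set.set_insert)
  have fin: "finite B'" using B(1) BB(1) by simp
  have cB: "card B' = card B - 1" using BB fin by simp
  have "(\<Sum>g\<in>PiE (insert b B') (\<lambda>_. C). \<phi> (g b)) = (\<Sum>c\<in>C. \<Sum>g\<in>PiE B' (\<lambda>_. C). \<phi> ((g(b := c)) b))"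
    by (rule sum_PiE_insert[OF BB(2)])
  also have "\<dots> = (\<Sum>c\<in>C. \<Sum>g\<in>PiE B' (\<lambda>_. C). \<phi> c)" by simp
  also have "\<dots> = (\<Sum>c\<in>C. real (card (PiE B' (\<lambda>_. C))) * \<phi> c)" by simp
  also have "\<dots> = (\<Sum>c\<in>C. real (card C ^ (card B - 1)) * \<phi> c)"
    using card_PiE_const[OF fin, of C] cB by simp
  finally have "(\<Sum>g\<in>PiE (insert b B') (\<lambda>_. C). \<phi> (g b)) = (\<Sum>c\<in>C. real (card C ^ (card B - 1)) * \<phi> c)" .
  then show ?thesis unfolding BB(1)[symmetric] by (simp only: sum_distrib_left)
qed

lemma exists_le_avg:
  fixes F :: "'e \<Rightarrow> real" and b :: real
  assumes "finite E" "E \<noteq> {}" "(\<Sum>e\<in>E. F e) \<le> card E * b"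
  shows "\<exists>e\<in>E. F e \<le> b"
proof (rule ccontr)
  assume "\<not> ?thesis"
  then have "\<forall>e\<in>E. b < F e" by auto
  then have "(\<Sum>e\<in>E. b) < (\<Sum>e\<in>E. F e)" using assms(1,2) by (intro sum_strict_mono) auto
  then show False using assms(3) by simp
qed

lemma ex_argmax_on: "finite A \<Longrightarrow> A \<noteq> {} \<Longrightarrow> \<exists>m\<in>A. \<forall>m'\<in>A. (f m' :: real) \<le> f m"
proof -
  assume A: "finite A" "A \<noteq> {}"
  have "Max (f ` A) \<in> f ` A" using A by simp
  then obtain m where m: "m \<in> A" "f m = Max (f ` A)" by (metis imageE)
  then have "\<forall>m'\<in>A. f m' \<le> f m" using A by simp
  then show ?thesis using m by blast
qed

lemma gal_inner:
  fixes P :: "'m \<Rightarrow> real" and Q :: "'c \<Rightarrow> 'y \<Rightarrow> real"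
  assumes A: "finite A" "m \<in> A" and Cf: "finite C" "C \<noteq> {}"
    and P: "\<And>m. 0 \<le> P m" and Q: "\<And>c y. 0 \<le> Q c y" and r: "0 < \<rho>" "\<rho> \<le> 1"
  shows "(\<Sum>e\<in>PiE A (\<lambda>_. C). (P m * Q (e m) y) powr \<sigma> * (\<Sum>m'\<in>A-{m}. (P m' * Q (e m') y) powr \<sigma>) powr \<rho>)
    \<le> real (card C ^ card A) * (P m powr \<sigma> * ((\<Sum>c\<in>C. Q c y powr \<sigma>) / card C)
        * ((\<Sum>m'\<in>A. P m' powr \<sigma>) * ((\<Sum>c\<in>C. Q c y powr \<sigma>) / card C)) powr \<rho>)"
proof -
  define B where "B = A - {m}"
  have AB: "A = insert m B" "m \<notin> B" "finite B" using A unfolding B_def by auto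
  define G where "G = (\<Sum>c\<in>C. Q c y powr \<sigma>)"
  define K where "K = real (card C)"
  have Kpos: "0 < K" using Cf unfolding K_def by (simp add: card_gt_0_iff)
  define gy where "gy = G / K"
  have G0: "0 \<le> G" unfolding G_def by (simp add: sum_nonneg)
  have gy0: "0 \<le> gy" unfolding gy_def using G0 Kpos by simp
  define S where "S = (\<Sum>m'\<in>A. P m' powr \<sigma>)"
  have S0: "0 \<le> S" unfolding S_def by (simp add: sum_nonneg)
  define E' where "E' = PiE B (\<lambda>_. C)"
  define N' where "N' = real (card E')"
  have N'eq: "N' = K ^ card B" unfolding N'_def E'_def K_def using card_PiE_const[OF AB(3)] by simp
  have E'fin: "finite E'" unfolding E'_def using AB(3) Cf(1) by (simp add: finite_PiE)
  have E'ne: "E' \<noteq> {}" unfolding E'_def using Cf(2) by (simp add: PiE_eq_empty_iff)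
  have N'pos: "0 < N'" unfolding N'_def using E'fin E'ne by (simp add: card_gt_0_iff)
  define H where "H g = (\<Sum>m'\<in>B. (P m' * Q (g m') y) powr \<sigma>)" for g
  have H0: "0 \<le> H g" for g unfolding H_def by (simp add: sum_nonneg)
  have "(\<Sum>e\<in>PiE A (\<lambda>_. C). (P m * Q (e m) y) powr \<sigma> * (\<Sum>m'\<in>A-{m}. (P m' * Q (e m') y) powr \<sigma>) powr \<rho>)
     = (\<Sum>e\<in>PiE (insert m B) (\<lambda>_. C). (P m * Q (e m) y) powr \<sigma> * (\<Sum>m'\<in>B. (P m' * Q (e m') y) powr \<sigma>) powr \<rho>)"
    using AB unfolding B_def by simp
  also have "\<dots> = (\<Sum>c\<in>C. \<Sum>g\<in>E'. (P m * Q ((g(m := c)) m) y) powr \<sigma> * (\<Sum>m'\<in>B. (P m' * Q ((g(m := c)) m') y) powr \<sigma>) powr \<rho>)"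
    unfolding E'_def by (rule sum_PiE_insert[OF AB(2)])
  also have "\<dots> = (\<Sum>c\<in>C. \<Sum>g\<in>E'. (P m * Q c y) powr \<sigma> * H g powr \<rho>)"
  proof (intro sum.cong refl)
    fix c g
    have "(\<Sum>m'\<in>B. (P m' * Q ((g(m := c)) m') y) powr \<sigma>) = H g"
      unfolding H_def by (rule sum.cong) (use AB(2) in auto)
    then show "(P m * Q ((g(m := c)) m) y) powr \<sigma> * (\<Sum>m'\<in>B. (P m' * Q ((g(m := c)) m') y) powr \<sigma>) powr \<rho>
        = (P m * Q c y) powr \<sigma> * H g powr \<rho>" by simp
  qed
  also have "\<dots> = (\<Sum>c\<in>C. (P m * Q c y) powr \<sigma>) * (\<Sum>g\<in>E'. H g powr \<rho>)"
    by (rule sum_product[symmetric])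
  also have "(\<Sum>c\<in>C. (P m * Q c y) powr \<sigma>) = P m powr \<sigma> * (K * gy)"
  proof -
    have "K * gy = G" unfolding gy_def using Kpos by simp
    moreover have "(\<Sum>c\<in>C. (P m * Q c y) powr \<sigma>) = P m powr \<sigma> * G"
      unfolding G_def using P Q by (simp add: powr_mult sum_distrib_left)
    ultimately show ?thesis by simp
  qed
  finally have eq1: "(\<Sum>e\<in>PiE A (\<lambda>_. C). (P m * Q (e m) y) powr \<sigma> * (\<Sum>m'\<in>A-{m}. (P m' * Q (e m') y) powr \<sigma>) powr \<rho>)
    = P m powr \<sigma> * (K * gy) * (\<Sum>g\<in>E'. H g powr \<rho>)" .
  have jen: "(\<Sum>g\<in>E'. H g powr \<rho>) \<le> N' * ((\<Sum>g\<in>E'. H g) / N') powr \<rho>"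
    unfolding N'_def by (rule jensen_powr[OF E'fin E'ne H0 r])
  have sumH: "(\<Sum>g\<in>E'. H g) \<le> N' * (S * gy)"
  proof -
    have "(\<Sum>g\<in>E'. H g) = (\<Sum>m'\<in>B. \<Sum>g\<in>E'. (P m' * Q (g m') y) powr \<sigma>)"
      unfolding H_def by (rule sum.swap)
    also have "\<dots> = (\<Sum>m'\<in>B. real (card C ^ (card B - 1)) * (\<Sum>c\<in>C. (P m' * Q c y) powr \<sigma>))"
      unfolding E'_def by (intro sum.cong refl sum_PiE_coord[OF AB(3)])
    also have "\<dots> = (\<Sum>m'\<in>B. K ^ (card B - 1) * (P m' powr \<sigma> * G))"
      unfolding G_def K_def using P Q by (simp add: powr_mult sum_distrib_left)
    also have "\<dots> \<le> N' * (S * gy)"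
    proof (cases "B = {}")
      case True
      then show ?thesis using N'pos S0 gy0 by simp
    next
      case False
      then have cB: "card B \<ge> 1" using AB(3) by (simp add: Suc_le_eq card_gt_0_iff)
      have "K ^ card B = K * K ^ (card B - 1)" using cB by (metis Suc_diff_le diff_Suc_1 power_Suc)
      then have KK: "K ^ (card B - 1) = N' / K" using N'eq Kpos by (simp add: field_simps)
      have "(\<Sum>m'\<in>B. K ^ (card B - 1) * (P m' powr \<sigma> * G)) = N' * gy * (\<Sum>m'\<in>B. P m' powr \<sigma>)"
        unfolding KK gy_def by (simp add: sum_distrib_left algebra_simps)
      also have "(\<Sum>m'\<in>B. P m' powr \<sigma>) \<le> S"
        unfolding S_def using A(1) AB(1) by (intro sum_mono2) auto
      then have "N' * gy * (\<Sum>m'\<in>B. P m' powr \<sigma>) \<le> N' * gy * S"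
        using N'pos gy0 by (intro mult_left_mono) auto
      finally show ?thesis by (simp add: algebra_simps)
    qed
    finally show ?thesis .
  qed
  have "((\<Sum>g\<in>E'. H g) / N') powr \<rho> \<le> (S * gy) powr \<rho>"
  proof (rule powr_mono2)
    show "0 \<le> \<rho>" using r by simp
    show "0 \<le> (\<Sum>g\<in>E'. H g) / N'" using N'pos H0 by (simp add: sum_nonneg)
    show "(\<Sum>g\<in>E'. H g) / N' \<le> S * gy" using sumH N'pos by (simp add: field_simps)
  qed
  then have "(\<Sum>g\<in>E'. H g powr \<rho>) \<le> N' * (S * gy) powr \<rho>"
    using jen N'pos by (meson mult_left_mono order_trans less_imp_le)
  then have "P m powr \<sigma> * (K * gy) * (\<Sum>g\<in>E'. H g powr \<rho>) \<le> P m powr \<sigma> * (K * gy) * (N' * (S * gy) powr \<rho>)"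
    using Kpos gy0 by (intro mult_left_mono) auto
  also have "\<dots> = (K * N') * (P m powr \<sigma> * gy * (S * gy) powr \<rho>)" by (simp add: algebra_simps)
  also have "K * N' = real (card C ^ card A)"
    using N'eq AB unfolding K_def by simp
  finally show ?thesis unfolding eq1 S_def gy_def G_def K_def by simp
qed


lemma err_point:
  fixes x z T \<sigma> \<rho> :: real
  assumes "0 \<le> x" "x \<le> z" "z powr \<sigma> \<le> T" "0 < \<sigma>" "0 < \<rho>" "\<sigma> + \<sigma> * \<rho> = 1"
  shows "x \<le> x powr \<sigma> * T powr \<rho>"
proof (cases "x = 0")
  case True
  then show ?thesis by simp
next
  case False
  then have xp: "0 < x" using assms(1) by simp
  have "x powr \<sigma> \<le> z powr \<sigma>" using assms xp by (intro powr_mono2) auto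
  then have xT: "x powr \<sigma> \<le> T" using assms(3) by simp
  have "(x powr \<sigma>) powr \<rho> \<le> T powr \<rho>" using xT assms(5) by (intro powr_mono2) auto
  then have "x powr \<sigma> * (x powr \<sigma>) powr \<rho> \<le> x powr \<sigma> * T powr \<rho>"
    by (intro mult_left_mono) auto
  moreover have "x powr \<sigma> * (x powr \<sigma>) powr \<rho> = x"
  proof -
    have "x powr \<sigma> * (x powr \<sigma>) powr \<rho> = x powr (\<sigma> + \<sigma> * \<rho>)"
      by (simp add: powr_powr powr_add)
    then show ?thesis using assms(6) xp by simp
  qed
  ultimately show ?thesis by simp
qed

lemma gallager:
  fixes P :: "'m \<Rightarrow> real" and Q :: "'c \<Rightarrow> 'y \<Rightarrow> real"
  assumes A: "finite A" "A \<noteq> {}" and Cf: "finite C" "C \<noteq> {}" and Y: "finite Y"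
    and P: "\<And>m. 0 \<le> P m" and Q: "\<And>c y. 0 \<le> Q c y" and s: "0 < s" "s \<le> 1/2"
  shows "\<exists>e\<in>PiE A (\<lambda>_. C). \<exists>d. (\<Sum>m\<in>A. P m * (\<Sum>y\<in>Y. Q (e m) y * (if d y \<noteq> m then 1 else 0)))
     \<le> (\<Sum>m\<in>A. P m powr (1 - s)) powr (1 / (1 - s))
        * (\<Sum>y\<in>Y. ((\<Sum>c\<in>C. Q c y powr (1 - s)) / card C) powr (1 / (1 - s)))"
proof -
  define \<sigma> where "\<sigma> = 1 - s"
  define \<rho> where "\<rho> = s / (1 - s)"
  have sig: "0 < \<sigma>" unfolding \<sigma>_def using s by simp
  have rho: "0 < \<rho>" "\<rho> \<le> 1" unfolding \<rho>_def using s by (auto simp: field_simps)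
  have sr: "\<sigma> + \<sigma> * \<rho> = 1" unfolding \<sigma>_def \<rho>_def using s by (simp add: field_simps)
  have p: "1 / (1 - s) = 1 + \<rho>" unfolding \<rho>_def using s by (simp add: field_simps)
  define E where "E = PiE A (\<lambda>_. C)"
  have Efin: "finite E" unfolding E_def using A Cf by (simp add: finite_PiE)
  have Ene: "E \<noteq> {}" unfolding E_def using Cf by (simp add: PiE_eq_empty_iff)
  have cardE: "card E = card C ^ card A" unfolding E_def by (rule card_PiE_const[OF A(1)])
  define a where "a e m y = P m * Q (e m) y" for e m y
  have a0: "0 \<le> a e m y" for e m y unfolding a_def using P Q by simp
  define F where "F e = (\<Sum>m\<in>A. \<Sum>y\<in>Y. (a e m y) powr \<sigma> * (\<Sum>m'\<in>A-{m}. a e m' y powr \<sigma>) powr \<rho>)" for e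
  define S where "S = (\<Sum>m\<in>A. P m powr \<sigma>)"
  have S0: "0 \<le> S" unfolding S_def by (simp add: sum_nonneg)
  define gy where "gy y = (\<Sum>c\<in>C. Q c y powr \<sigma>) / card C" for y
  have gy0: "0 \<le> gy y" for y unfolding gy_def by (simp add: sum_nonneg)
  define Bnd where "Bnd = S powr (1 + \<rho>) * (\<Sum>y\<in>Y. gy y powr (1 + \<rho>))"
  have "(\<Sum>e\<in>E. F e) = (\<Sum>m\<in>A. \<Sum>y\<in>Y. \<Sum>e\<in>E. (a e m y) powr \<sigma> * (\<Sum>m'\<in>A-{m}. a e m' y powr \<sigma>) powr \<rho>)"
    unfolding F_def by (simp add: sum.swap[of _ E] sum.swap[of _ E Y])
  also have "\<dots> \<le> (\<Sum>m\<in>A. \<Sum>y\<in>Y. real (card C ^ card A) * (P m powr \<sigma> * gy y * (S * gy y) powr \<rho>))"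
  proof (intro sum_mono)
    fix m y assume "m \<in> A"
    show "(\<Sum>e\<in>E. (a e m y) powr \<sigma> * (\<Sum>m'\<in>A-{m}. a e m' y powr \<sigma>) powr \<rho>)
        \<le> real (card C ^ card A) * (P m powr \<sigma> * gy y * (S * gy y) powr \<rho>)"
      unfolding E_def a_def S_def gy_def
      by (rule gal_inner[OF A(1) \<open>m \<in> A\<close> Cf P Q rho])
  qed
  also have "\<dots> = real (card E) * (S * (\<Sum>y\<in>Y. gy y * (S * gy y) powr \<rho>))"
  proof -
    define c where "c = real (card C ^ card A)"
    have "(\<Sum>m\<in>A. \<Sum>y\<in>Y. c * (P m powr \<sigma> * gy y * (S * gy y) powr \<rho>))
        = (\<Sum>y\<in>Y. \<Sum>m\<in>A. c * (P m powr \<sigma> * (gy y * (S * gy y) powr \<rho>)))"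
      by (subst sum.swap) (simp add: mult.assoc)
    also have "\<dots> = (\<Sum>y\<in>Y. c * ((\<Sum>m\<in>A. P m powr \<sigma>) * (gy y * (S * gy y) powr \<rho>)))"
      by (simp only: sum_distrib_left[symmetric] sum_distrib_right[symmetric])
    also have "\<dots> = c * (S * (\<Sum>y\<in>Y. gy y * (S * gy y) powr \<rho>))"
      unfolding S_def[symmetric] by (simp only: sum_distrib_left[symmetric])
    finally show ?thesis unfolding c_def cardE by simp
  qed
  also have "S * (\<Sum>y\<in>Y. gy y * (S * gy y) powr \<rho>) = Bnd"
  proof -
    have "S * (\<Sum>y\<in>Y. gy y * (S * gy y) powr \<rho>) = (S * S powr \<rho>) * (\<Sum>y\<in>Y. gy y * gy y powr \<rho>)"
      using S0 gy0 by (simp add: powr_mult sum_distrib_left algebra_simps)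
    also have "\<dots> = Bnd" unfolding Bnd_def using S0 gy0 by (simp add: mult_powr_self)
    finally show ?thesis .
  qed
  finally have sumF: "(\<Sum>e\<in>E. F e) \<le> real (card E) * Bnd" .
  obtain e where e: "e \<in> E" "F e \<le> Bnd" using exists_le_avg[OF Efin Ene sumF] by blast
  define dec where "dec y = (SOME m. m \<in> A \<and> (\<forall>m'\<in>A. a e m' y \<le> a e m y))" for y
  have dec: "dec y \<in> A \<and> (\<forall>m'\<in>A. a e m' y \<le> a e (dec y) y)" for y
  proof -
    have "\<exists>m. m \<in> A \<and> (\<forall>m'\<in>A. a e m' y \<le> a e m y)"
      using ex_argmax_on[OF A, of "\<lambda>m. a e m y"] by blast
    then show ?thesis unfolding dec_def by (rule someI_ex)
  qed
  have "(\<Sum>m\<in>A. P m * (\<Sum>y\<in>Y. Q (e m) y * (if dec y \<noteq> m then 1 else 0)))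
      = (\<Sum>m\<in>A. \<Sum>y\<in>Y. a e m y * (if dec y \<noteq> m then 1 else 0))"
    unfolding a_def by (simp add: sum_distrib_left algebra_simps)
  also have "\<dots> \<le> F e"
    unfolding F_def
  proof (intro sum_mono)
    fix m y assume m: "m \<in> A"
    show "a e m y * (if dec y \<noteq> m then 1 else 0) \<le> (a e m y) powr \<sigma> * (\<Sum>m'\<in>A-{m}. a e m' y powr \<sigma>) powr \<rho>"
    proof (cases "dec y = m")
      case True
      then show ?thesis by simp
    next
      case False
      have T: "a e (dec y) y powr \<sigma> \<le> (\<Sum>m'\<in>A-{m}. a e m' y powr \<sigma>)"
        by (rule member_le_sum) (use dec[of y] False A(1) in auto)
      have "a e m y \<le> (a e m y) powr \<sigma> * (\<Sum>m'\<in>A-{m}. a e m' y powr \<sigma>) powr \<rho>"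
        by (rule err_point[OF a0 _ T sig rho(1) sr]) (use dec[of y] m in auto)
      then show ?thesis using False by simp
    qed
  qed
  also have "\<dots> \<le> Bnd" by (rule e(2))
  finally have fin: "(\<Sum>m\<in>A. P m * (\<Sum>y\<in>Y. Q (e m) y * (if dec y \<noteq> m then 1 else 0))) \<le> Bnd" .
  have "Bnd = (\<Sum>m\<in>A. P m powr (1 - s)) powr (1 / (1 - s))
        * (\<Sum>y\<in>Y. ((\<Sum>c\<in>C. Q c y powr (1 - s)) / card C) powr (1 / (1 - s)))"
    unfolding Bnd_def S_def gy_def p \<sigma>_def by simp
  then show ?thesis using fin e(1) unfolding E_def by blast
qed

lemma stoch_nonneg: "stochastic W \<Longrightarrow> 0 \<le> W a b"
  by (simp add: stochastic_def)

lemma stoch_le1: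
  fixes W :: "'a::finite \<Rightarrow> 'a \<Rightarrow> real"
  assumes "stochastic W" shows "W a b \<le> 1"
proof -
  have "W a b \<le> (\<Sum>a'\<in>UNIV. W a' b)"
    by (rule member_le_sum) (use assms in \<open>auto simp: stochastic_def\<close>)
  then show ?thesis using assms by (simp add: stochastic_def)
qed

lemma pf_package:
  fixes A :: "'a::finite \<Rightarrow> 'a \<Rightarrow> real"
  assumes A: "\<And>a b. 0 \<le> A a b" and irr: "irred A"
  shows "leig A (pf_root A) (pf_vec A)" "0 < pf_root A" "\<And>i. 1 \<le> pf_vec A i"
proof -
  obtain r v where l: "leig A r v" using pf_exists[OF A irr] by blast
  have "pf_root A = r" by (rule pf_root_eq[OF A l])
  then show "leig A (pf_root A) (pf_vec A)" "\<And>i. 1 \<le> pf_vec A i"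
    using pf_vec_props[OF A irr l] by auto
  show "0 < pf_root A" using leig_root_pos[OF A irr l] \<open>pf_root A = r\<close> by simp
qed

lemma step_rel_powr:
  assumes "\<And>a b. 0 \<le> W a b" "0 < t"
  shows "step_rel (\<lambda>a b. W a b powr t) = step_rel W"
  using assms unfolding step_rel_def by (auto simp: order_le_less)

lemma irred_powr:
  assumes "\<And>a b. 0 \<le> W a b" "0 < t" "irreducible_mat W"
  shows "irred (\<lambda>a b. W a b powr t)"
  using assms unfolding irred_def irreducible_mat_def by (simp add: step_rel_powr)

lemma markov_prob_nonneg:
  assumes "\<And>x. 0 \<le> P1 x" "\<And>a b. 0 \<le> W a b" shows "0 \<le> markov_prob P1 W xs"
proof (cases xs)
  case Nil then show ?thesis by (simp add: markov_prob_def)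
next
  case (Cons x ys) then show ?thesis using assms by (simp add: markov_prob_cons chain_nonneg)
qed

lemma leig_ev:
  "leig A r v \<Longrightarrow> (\<Sum>b\<in>UNIV. A b u * v b) = r * v u"
  unfolding leig_def by (simp add: mult.commute)

lemma source_bound:
  fixes PM1 :: "'m::finite \<Rightarrow> real" and Ws :: "'m \<Rightarrow> 'm \<Rightarrow> real"
  assumes P: "prob_vec PM1" and W: "irr_aper_chain Ws" and s: "0 < s" "s < 1" and k: "1 \<le> k"
  shows "(\<Sum>ms\<in>{ms. length ms = k}. markov_prob PM1 Ws ms powr (1 - s))
       \<le> pf_root (As Ws s) ^ (k - 1) * dotp (pf_vec (As Ws s)) (\<lambda>m. PM1 m powr (1 - s))"
proof -
  have Wn: "\<And>a b. 0 \<le> Ws a b" using W by (simp add: irr_aper_chain_def stochastic_def)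
  have Pn: "\<And>a. 0 \<le> PM1 a" using P by (simp add: prob_vec_def)
  have AsE: "As Ws s = (\<lambda>a b. Ws a b powr (1 - s))" by (simp add: As_def[abs_def])
  have An: "\<And>a b. 0 \<le> As Ws s a b" by (simp add: As_def)
  have irr: "irred (As Ws s)" unfolding AsE
    by (rule irred_powr[OF Wn]) (use s W in \<open>auto simp: irr_aper_chain_def\<close>)
  note pf = pf_package[OF An irr]
  define lam where "lam = pf_root (As Ws s)"
  define v where "v = pf_vec (As Ws s)"
  obtain k' where kk: "k = Suc k'" using k by (cases k) auto
  have "(\<Sum>ms\<in>{ms. length ms = k}. markov_prob PM1 Ws ms powr (1 - s))
      = (\<Sum>m\<in>UNIV. PM1 m powr (1 - s) * (\<Sum>ms\<in>{ms. length ms = k'}. chain (As Ws s) m ms))"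
    unfolding kk sum_len_Suc markov_prob_cons
    using Pn Wn by (simp add: powr_mult chain_nonneg chain_powr sum_distrib_left AsE)
  also have "\<dots> \<le> (\<Sum>m\<in>UNIV. PM1 m powr (1 - s) * (lam ^ k' * v m))"
  proof (rule sum_mono, rule mult_left_mono)
    fix m
    show "(\<Sum>ms\<in>{ms. length ms = k'}. chain (As Ws s) m ms) \<le> lam ^ k' * v m"
      by (rule chain_bound[OF An]) (use leig_ev[OF pf(1)] pf(2,3) in \<open>auto simp: lam_def v_def\<close>)
  qed simp
  also have "\<dots> = lam ^ (k - 1) * dotp v (\<lambda>m. PM1 m powr (1 - s))"
    unfolding kk dotp_def by (simp add: sum_distrib_left algebra_simps)
  finally show ?thesis unfolding lam_def v_def .
qed

definition shf :: "('x::ab_group_add \<times> 'z) list \<Rightarrow> 'x list \<Rightarrow> ('x \<times> 'z) list" where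
  "shf y c = map2 (\<lambda>(x, z) t. (x - t, z)) y c"

lemma shf_cons: "shf ((x, z) # y) (t # c) = (x - t, z) # shf y c"
  by (simp add: shf_def)

lemma shf_nil: "shf [] c = []"
  by (simp add: shf_def)

lemma sum_minus_reindex:
  fixes f :: "'x::{finite,ab_group_add} \<Rightarrow> real"
  shows "(\<Sum>t\<in>UNIV. f (x - t)) = (\<Sum>t\<in>UNIV. f t)"
  by (rule sum.reindex_bij_witness[of _ "\<lambda>t. x - t" "\<lambda>t. x - t"]) auto

lemma G_rec:
  fixes W :: "'x::{finite,ab_group_add} \<times> 'z::finite \<Rightarrow> 'x \<times> 'z \<Rightarrow> real"
  assumes W: "\<And>a b. 0 \<le> W a b"
  shows "(\<Sum>c\<in>{c. length c = Suc m}. chain W u (shf ((x, z) # y) c) powr \<sigma>)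
     = (\<Sum>t\<in>UNIV. W (x - t, z) u powr \<sigma> * (\<Sum>c\<in>{c. length c = m}. chain W (x - t, z) (shf y c) powr \<sigma>))"
  unfolding sum_len_Suc shf_cons
  using W by (simp add: powr_mult chain_nonneg sum_distrib_left)

lemma G_top:
  fixes W :: "'x::{finite,ab_group_add} \<times> 'z::finite \<Rightarrow> 'x \<times> 'z \<Rightarrow> real"
  assumes W: "\<And>a b. 0 \<le> W a b" and P: "\<And>a. 0 \<le> P1 a"
  shows "(\<Sum>c\<in>{c. length c = Suc m}. markov_prob P1 W (shf ((x, z) # y) c) powr \<sigma>)
     = (\<Sum>t\<in>UNIV. P1 (x - t, z) powr \<sigma> * (\<Sum>c\<in>{c. length c = m}. chain W (x - t, z) (shf y c) powr \<sigma>))"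
  unfolding sum_len_Suc shf_cons markov_prob_cons
  using W P by (simp add: powr_mult chain_nonneg sum_distrib_left)

definition Kp :: "('x::{finite,ab_group_add} \<times> 'z::finite \<Rightarrow> 'x \<times> 'z \<Rightarrow> real) \<Rightarrow> real \<Rightarrow> 'z \<Rightarrow> 'z \<Rightarrow> real" where
  "Kp Wc s z z' = (\<Sum>x\<in>UNIV. Wc (x, z) (0, z') powr (1 - s))"

lemma chain_snd:
  "snd u = snd u' \<Longrightarrow> chain (\<lambda>b' b. f b' (snd b)) u y = chain (\<lambda>b' b. f b' (snd b)) u' y"
  by (cases y) auto

lemma Gchain_i:
  fixes Wc :: "'x::{finite,ab_group_add} \<times> 'z::finite \<Rightarrow> 'x \<times> 'z \<Rightarrow> real"
  assumes a2: "assm2_i Wc" and W: "\<And>a b. 0 \<le> Wc a b" and s: "s < 1"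
  shows "length y = m \<Longrightarrow> (\<Sum>c\<in>{c. length c = m}. chain Wc u (shf y c) powr (1 - s))
     = chain (\<lambda>b' b. Kp Wc s (snd b') (snd b)) u y"
proof (induction y arbitrary: u m)
  case Nil
  then show ?case by (simp add: shf_nil)
next
  case (Cons p y)
  obtain x z where p: "p = (x, z)" by (cases p)
  obtain m' where m: "m = Suc m'" "length y = m'" using Cons.prems by auto
  have "(\<Sum>c\<in>{c. length c = m}. chain Wc u (shf (p # y) c) powr (1 - s))
      = (\<Sum>t\<in>UNIV. Wc (x - t, z) u powr (1 - s) * chain (\<lambda>b' b. Kp Wc s (snd b') (snd b)) (x - t, z) y)"
    unfolding p m(1) G_rec[OF W] using Cons.IH[OF m(2)] by simp
  also have "\<dots> = (\<Sum>t\<in>UNIV. Wc (x - t, z) u powr (1 - s)) * chain (\<lambda>b' b. Kp Wc s (snd b') (snd b)) (x, z) y"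
    by (subst chain_snd[of _ "(x, z)"]) (simp_all add: sum_distrib_right)
  also have "(\<Sum>t\<in>UNIV. Wc (x - t, z) u powr (1 - s)) = (\<Sum>t\<in>UNIV. Wc (t, z) u powr (1 - s))"
    by (rule sum_minus_reindex[of "\<lambda>t. Wc (t, z) u powr (1 - s)"])
  also have "\<dots> = Kp Wc s z (snd u)"
    using a2 s unfolding assm2_i_def Kp_def by (metis prod.collapse)
  finally show ?case unfolding p by simp
qed

lemma Gchain_ii:
  fixes Wc :: "'x::{finite,ab_group_add} \<times> 'z::finite \<Rightarrow> 'x \<times> 'z \<Rightarrow> real"
  assumes z0: "\<And>z::'z. z = z0" and W: "\<And>a b. 0 \<le> Wc a b"
    and l: "leig (\<lambda>x x'. Wc (x, z0) (x', z0) powr \<sigma>) lam v" and v1: "\<And>x. 1 \<le> v x" and lam: "0 \<le> lam"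
  shows "length y = m \<Longrightarrow> (\<Sum>c\<in>{c. length c = m}. chain Wc u (shf y c) powr \<sigma>) \<le> lam ^ m * v (fst u)"
proof (induction y arbitrary: u m)
  case Nil
  then show ?case using v1[of "fst u"] by (simp add: shf_nil)
next
  case (Cons p y)
  obtain x z where p: "p = (x, z)" by (cases p)
  obtain m' where m: "m = Suc m'" "length y = m'" using Cons.prems by auto
  have "(\<Sum>c\<in>{c. length c = m}. chain Wc u (shf (p # y) c) powr \<sigma>)
      = (\<Sum>t\<in>UNIV. Wc (x - t, z) u powr \<sigma> * (\<Sum>c\<in>{c. length c = m'}. chain Wc (x - t, z) (shf y c) powr \<sigma>))"
    unfolding p m(1) by (rule G_rec[OF W])
  also have "\<dots> \<le> (\<Sum>t\<in>UNIV. Wc (x - t, z) u powr \<sigma> * (lam ^ m' * v (x - t)))"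
    by (intro sum_mono mult_left_mono) (use Cons.IH[OF m(2)] in auto)
  also have "\<dots> = (\<Sum>t\<in>UNIV. Wc (t, z) u powr \<sigma> * (lam ^ m' * v t))"
    by (rule sum_minus_reindex[of "\<lambda>t. Wc (t, z) u powr \<sigma> * (lam ^ m' * v t)"])
  also have "\<dots> = lam ^ m' * (\<Sum>t\<in>UNIV. v t * Wc (t, z0) (fst u, z0) powr \<sigma>)"
  proof -
    have "u = (fst u, z0)" "z = z0" using z0 by (auto intro: prod_eqI)
    then show ?thesis by (simp add: sum_distrib_left algebra_simps)
  qed
  also have "\<dots> = lam ^ m' * (lam * v (fst u))" using l by (simp add: leig_def)
  finally show ?case unfolding m(1) by (simp add: algebra_simps)
qed

lemma trancl_map:
  assumes "\<And>a b. (a, b) \<in> R \<Longrightarrow> (f a, f b) \<in> R'" and "(a, b) \<in> R\<^sup>+"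
  shows "(f a, f b) \<in> R'\<^sup>+"
  using assms(2) by (induction rule: trancl_induct) (auto intro: assms(1) trancl_into_trancl)

lemma assm2_sum:
  assumes "assm2_i Wc" "s < 1"
  shows "(\<Sum>x\<in>UNIV. Wc (x, z) (x1, z') powr (1 - s)) = (\<Sum>x\<in>UNIV. Wc (x, z) (0, z') powr (1 - s))"
  using assms unfolding assm2_i_def by blast

lemma K_mat_eq: "K_mat Wc s = (\<lambda>z z'. Kp Wc s z z' powr (1 / (1 - s)))"
  by (simp add: K_mat_def Kp_def fun_eq_iff)

lemma Kp_nonneg: "0 \<le> Kp Wc s z z'"
  by (simp add: Kp_def sum_nonneg)

lemma Kp_pos:
  fixes Wc :: "'x::{finite,ab_group_add} \<times> 'z::finite \<Rightarrow> 'x \<times> 'z \<Rightarrow> real"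
  assumes a2: "assm2_i Wc" and W: "\<And>a b. 0 \<le> Wc a b" and s: "s < 1" and pos: "Wc (x2, z2) (x1, z1) > 0"
  shows "Kp Wc s z2 z1 > 0"
proof -
  have "0 < Wc (x2, z2) (x1, z1) powr (1 - s)" using pos by simp
  also have "\<dots> \<le> (\<Sum>x\<in>UNIV. Wc (x, z2) (x1, z1) powr (1 - s))"
    by (rule member_le_sum[where f = "\<lambda>x. Wc (x, z2) (x1, z1) powr (1 - s)"]) auto
  also have "\<dots> = Kp Wc s z2 z1" unfolding Kp_def by (rule assm2_sum[OF a2 s])
  finally show ?thesis .
qed

lemma irred_K:
  fixes Wc :: "'x::{finite,ab_group_add} \<times> 'z::finite \<Rightarrow> 'x \<times> 'z \<Rightarrow> real"
  assumes a2: "assm2_i Wc" and W: "\<And>a b. 0 \<le> Wc a b" and s: "s < 1" and irr: "irreducible_mat Wc"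
  shows "irred (K_mat Wc s)"
  unfolding irred_def
proof (intro allI)
  fix z z' :: 'z
  have edge: "(snd a, snd b) \<in> step_rel (K_mat Wc s)" if "(a, b) \<in> step_rel Wc" for a b
  proof -
    obtain x1 z1 where a: "a = (x1, z1)" by (cases a)
    obtain x2 z2 where b: "b = (x2, z2)" by (cases b)
    have "Wc (x2, z2) (x1, z1) > 0" using that a b by (simp add: step_rel_def)
    then have "Kp Wc s z2 z1 > 0" by (rule Kp_pos[OF a2 W s])
    then show ?thesis using a b by (simp add: step_rel_def K_mat_eq)
  qed
  fix x :: 'x
  have "((x, z), (x, z')) \<in> (step_rel Wc)\<^sup>+" using irr by (simp add: irreducible_mat_def)
  from trancl_map[of "step_rel Wc" snd "step_rel (K_mat Wc s)", OF edge this]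
  show "(z, z') \<in> (step_rel (K_mat Wc s))\<^sup>+" by simp
qed

lemma sum_pair_snd:
  fixes f :: "'z::finite \<Rightarrow> real"
  shows "(\<Sum>b\<in>(UNIV::('x::finite \<times> 'z) set). f (snd b)) = real CARD('x) * (\<Sum>z\<in>UNIV. f z)"
proof -
  have "(\<Sum>b\<in>(UNIV::('x \<times> 'z) set). f (snd b)) = (\<Sum>x\<in>(UNIV::'x set). \<Sum>z\<in>(UNIV::'z set). f z)"
    unfolding UNIV_Times_UNIV[symmetric] sum.cartesian_product by (rule sum.cong) auto
  then show ?thesis by simp
qed

lemma chan_i:
  fixes Wc :: "'x::{finite,ab_group_add} \<times> 'z::finite \<Rightarrow> 'x \<times> 'z \<Rightarrow> real"
    and PXZ1 :: "'x \<times> 'z \<Rightarrow> real"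
  assumes a2: "assm2_i Wc" and W: "irr_aper_chain Wc" and P: "prob_vec PXZ1"
    and s: "0 < s" "s < 1" and n: "1 \<le> n"
  shows "(\<Sum>y\<in>{y. length y = n}. ((\<Sum>c\<in>{c::'x list. length c = n}. markov_prob PXZ1 Wc (shf y c) powr (1 - s))
            / card {c::'x list. length c = n}) powr (1 / (1 - s)))
     \<le> real CARD('x) ^ n / real CARD('x) powr (real n / (1 - s)) * pf_root (K_mat Wc s) ^ (n - 1)
        * dotp (pf_vec (K_mat Wc s)) (\<lambda>z. (\<Sum>x\<in>UNIV. PXZ1 (x, z) powr (1 - s)) powr (1 / (1 - s)))"
proof -
  define p where "p = 1 / (1 - s)"
  have p0: "0 < p" unfolding p_def using s by simp
  have Wn: "\<And>a b. 0 \<le> Wc a b" using W stoch_nonneg unfolding irr_aper_chain_def by blast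
  have Pn: "\<And>a. 0 \<le> PXZ1 a" using P unfolding prob_vec_def by blast
  define X where "X = real CARD('x)"
  have X0: "0 < X" unfolding X_def by simp
  define K where "K = K_mat Wc s"
  have Kn: "\<And>a b. 0 \<le> K a b" unfolding K_def K_mat_eq by simp
  have irrK: "irred K" unfolding K_def
    by (rule irred_K[OF a2 Wn s(2)]) (use W in \<open>simp add: irr_aper_chain_def\<close>)
  note pf = pf_package[OF Kn irrK]
  define lam where "lam = pf_root K"
  define v where "v = pf_vec K"
  define w where "w z = (\<Sum>x\<in>UNIV. PXZ1 (x, z) powr (1 - s)) powr p" for z
  have w0: "0 \<le> w z" for z unfolding w_def by simp
  obtain n' where nn: "n = Suc n'" using n by (cases n) auto
  define CK :: "'x \<times> 'z \<Rightarrow> ('x \<times> 'z) list \<Rightarrow> real" where "CK b y' = chain (\<lambda>b' b. K (snd b') (snd b)) b y'" for b y'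
  have cardC: "real (card {c::'x list. length c = n}) = X ^ n" unfolding X_def by (simp add: card_len)
  have Xnp: "(X ^ n) powr p > 0" using X0 by simp
  have pt: "((\<Sum>c\<in>{c::'x list. length c = n}. markov_prob PXZ1 Wc (shf (b # y') c) powr (1 - s))
            / card {c::'x list. length c = n}) powr p = w (snd b) * CK b y' / (X ^ n) powr p"
    if y': "length y' = n'" for b y'
  proof -
    obtain x z where b: "b = (x, z)" by (cases b)
    have "(\<Sum>c\<in>{c::'x list. length c = n}. markov_prob PXZ1 Wc (shf (b # y') c) powr (1 - s))
       = (\<Sum>t\<in>UNIV. PXZ1 (x - t, z) powr (1 - s) * chain (\<lambda>b' b. Kp Wc s (snd b') (snd b)) (x - t, z) y')"
      unfolding nn b G_top[OF Wn Pn] using Gchain_i[OF a2 Wn s(2) y'] by simp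
    also have "\<dots> = (\<Sum>t\<in>UNIV. PXZ1 (x - t, z) powr (1 - s)) * chain (\<lambda>b' b. Kp Wc s (snd b') (snd b)) (x, z) y'"
      by (subst chain_snd[of _ "(x, z)"]) (simp_all add: sum_distrib_right)
    also have "(\<Sum>t\<in>UNIV. PXZ1 (x - t, z) powr (1 - s)) = (\<Sum>t\<in>UNIV. PXZ1 (t, z) powr (1 - s))"
      by (rule sum_minus_reindex[of "\<lambda>t. PXZ1 (t, z) powr (1 - s)"])
    finally have G: "(\<Sum>c\<in>{c::'x list. length c = n}. markov_prob PXZ1 Wc (shf (b # y') c) powr (1 - s))
       = (\<Sum>t\<in>UNIV. PXZ1 (t, z) powr (1 - s)) * chain (\<lambda>b' b. Kp Wc s (snd b') (snd b)) (x, z) y'" .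
    have CKeq: "chain (\<lambda>b' b. Kp Wc s (snd b') (snd b)) (x, z) y' powr p = CK b y'"
      unfolding CK_def K_def K_mat_eq b p_def by (simp add: chain_powr Kp_nonneg)
    show ?thesis
      unfolding G cardC using CKeq
      by (simp add: powr_divide powr_mult chain_nonneg Kp_nonneg sum_nonneg w_def b X0)
  qed
  have "(\<Sum>y\<in>{y. length y = n}. ((\<Sum>c\<in>{c::'x list. length c = n}. markov_prob PXZ1 Wc (shf y c) powr (1 - s))
            / card {c::'x list. length c = n}) powr p)
      = (\<Sum>b\<in>UNIV. \<Sum>y'\<in>{y'. length y' = n'}. w (snd b) * CK b y' / (X ^ n) powr p)"
  proof -
    define F where "F y = ((\<Sum>c\<in>{c::'x list. length c = n}. markov_prob PXZ1 Wc (shf y c) powr (1 - s))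
            / card {c::'x list. length c = n}) powr p" for y
    have "(\<Sum>y\<in>{y. length y = n}. F y) = (\<Sum>b\<in>UNIV. \<Sum>y'\<in>{y'. length y' = n'}. F (b # y'))"
      using sum_len_Suc[of F n'] unfolding nn[symmetric] .
    also have "\<dots> = (\<Sum>b\<in>UNIV. \<Sum>y'\<in>{y'. length y' = n'}. w (snd b) * CK b y' / (X ^ n) powr p)"
      by (intro sum.cong refl) (simp add: F_def pt)
    finally show ?thesis unfolding F_def .
  qed
  also have "\<dots> = (\<Sum>b\<in>(UNIV::('x \<times> 'z) set). w (snd b) * (\<Sum>y'\<in>{y'. length y' = n'}. CK b y')) / (X ^ n) powr p"
    by (simp add: sum_divide_distrib sum_distrib_left)
  also have "\<dots> \<le> (\<Sum>b\<in>(UNIV::('x \<times> 'z) set). w (snd b) * ((X * lam) ^ n' * v (snd b))) / (X ^ n) powr p"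
  proof (rule divide_right_mono)
    show "0 \<le> (X ^ n) powr p" by simp
    show "(\<Sum>b\<in>(UNIV::('x \<times> 'z) set). w (snd b) * (\<Sum>y'\<in>{y'. length y' = n'}. CK b y')) \<le> (\<Sum>b\<in>(UNIV::('x \<times> 'z) set). w (snd b) * ((X * lam) ^ n' * v (snd b)))"
    proof (rule sum_mono, rule mult_left_mono)
    fix b :: "'x \<times> 'z"
    show "0 \<le> w (snd b)" by (rule w0)
    show "(\<Sum>y'\<in>{y'. length y' = n'}. CK b y') \<le> (X * lam) ^ n' * v (snd b)"
      unfolding CK_def
    proof (rule chain_bound)
      show "\<And>a b. 0 \<le> K (snd a) (snd b)" using Kn by simp
      show "\<And>u. 1 \<le> v (snd u)" using pf(3) unfolding v_def by simp
      show "0 \<le> X * lam" using X0 pf(2) unfolding lam_def by simp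
      fix u :: "'x \<times> 'z"
      have "(\<Sum>b\<in>(UNIV::('x \<times> 'z) set). K (snd b) (snd u) * v (snd b)) = X * (\<Sum>z\<in>UNIV. K z (snd u) * v z)"
        unfolding X_def by (rule sum_pair_snd[where f = "\<lambda>z. K z (snd u) * v z"])
      also have "\<dots> = X * (lam * v (snd u))" using leig_ev[OF pf(1)] unfolding lam_def v_def by simp
      finally show "(\<Sum>b\<in>(UNIV::('x \<times> 'z) set). K (snd b) (snd u) * v (snd b)) \<le> X * lam * v (snd u)" by simp
    qed
    qed
  qed
  also have "(\<Sum>b\<in>(UNIV::('x \<times> 'z) set). w (snd b) * ((X * lam) ^ n' * v (snd b))) = (X * lam) ^ n' * (X * (\<Sum>z\<in>UNIV. w z * v z))"
  proof -
    have "(\<Sum>b\<in>(UNIV::('x \<times> 'z) set). w (snd b) * ((X * lam) ^ n' * v (snd b))) = (X * lam) ^ n' * (\<Sum>b\<in>(UNIV::('x \<times> 'z) set). w (snd b) * v (snd b))"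
      by (simp add: sum_distrib_left algebra_simps)
    also have "(\<Sum>b\<in>(UNIV::('x \<times> 'z) set). w (snd b) * v (snd b)) = X * (\<Sum>z\<in>UNIV. w z * v z)"
      unfolding X_def by (rule sum_pair_snd[where f = "\<lambda>z. w z * v z"])
    finally show ?thesis .
  qed
  also have "(X * lam) ^ n' * (X * (\<Sum>z\<in>UNIV. w z * v z)) / (X ^ n) powr p
      = X ^ n / X powr (real n / (1 - s)) * lam ^ (n - 1) * dotp v w"
  proof -
    have "(X ^ n) powr p = X powr (real n / (1 - s))"
      using X0 by (simp add: powr_realpow[symmetric] powr_powr p_def)
    then show ?thesis unfolding nn dotp_def by (simp add: power_mult_distrib algebra_simps mult.commute)
  qed
  finally show ?thesis unfolding X_def lam_def v_def w_def p_def K_def by simp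
qed

lemma card1_all_eq:
  assumes "CARD('z::finite) = 1" shows "(z::'z) = z0"
proof -
  obtain a where "(UNIV::'z set) = {a}" using assms by (metis card_1_singletonE)
  then show ?thesis by (metis UNIV_I singletonD)
qed

lemma chan_ii:
  fixes Wc :: "'x::{finite,ab_group_add} \<times> 'z::finite \<Rightarrow> 'x \<times> 'z \<Rightarrow> real"
    and PXZ1 :: "'x \<times> 'z \<Rightarrow> real"
  assumes z1: "CARD('z) = 1" and W: "irr_aper_chain Wc" and P: "prob_vec PXZ1"
    and s: "0 < s" "s < 1" and n: "1 \<le> n"
  shows "(\<Sum>y\<in>{y. length y = n}. ((\<Sum>c\<in>{c::'x list. length c = n}. markov_prob PXZ1 Wc (shf y c) powr (1 - s))
            / card {c::'x list. length c = n}) powr (1 / (1 - s)))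
     \<le> real CARD('x) ^ n * (pf_root (\<lambda>x x'. Wc (x, undefined) (x', undefined) powr (1 - s)) ^ (n - 1)
        * dotp (pf_vec (\<lambda>x x'. Wc (x, undefined) (x', undefined) powr (1 - s))) (\<lambda>x. PXZ1 (x, undefined) powr (1 - s))
        / real CARD('x) ^ n) powr (1 / (1 - s))"
proof -
  define z0 :: 'z where "z0 = undefined"
  have zz: "\<And>z::'z. z = z0" using card1_all_eq[OF z1] by blast
  define p where "p = 1 / (1 - s)"
  have p0: "0 < p" unfolding p_def using s by simp
  have Wn: "\<And>a b. 0 \<le> Wc a b" using W stoch_nonneg unfolding irr_aper_chain_def by blast
  have Pn: "\<And>a. 0 \<le> PXZ1 a" using P unfolding prob_vec_def by blast
  define X where "X = real CARD('x)"
  have X0: "0 < X" unfolding X_def by simp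
  define Bx where "Bx = (\<lambda>x x'. Wc (x, z0) (x', z0) powr (1 - s))"
  have Bn: "\<And>a b. 0 \<le> Bx a b" unfolding Bx_def by simp
  have irrB: "irred Bx"
    unfolding irred_def
  proof (intro allI)
    fix x x' :: 'x
    have edge: "(fst a, fst b) \<in> step_rel Bx" if "(a, b) \<in> step_rel Wc" for a b
    proof -
      have "a = (fst a, z0)" "b = (fst b, z0)" using zz by (auto intro: prod_eqI)
      then have "Wc (fst b, z0) (fst a, z0) > 0" using that by (simp add: step_rel_def)
      then show ?thesis unfolding step_rel_def Bx_def by simp
    qed
    have "((x, z0), (x', z0)) \<in> (step_rel Wc)\<^sup>+" using W by (simp add: irr_aper_chain_def irreducible_mat_def)
    from trancl_map[of "step_rel Wc" fst "step_rel Bx", OF edge this]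
    show "(x, x') \<in> (step_rel Bx)\<^sup>+" by simp
  qed
  note pf = pf_package[OF Bn irrB]
  define lam where "lam = pf_root Bx"
  define v where "v = pf_vec Bx"
  define D where "D = dotp v (\<lambda>x. PXZ1 (x, z0) powr (1 - s))"
  have lam0: "0 \<le> lam" using pf(2) unfolding lam_def by simp
  obtain n' where nn: "n = Suc n'" using n by (cases n) auto
  have cardC: "real (card {c::'x list. length c = n}) = X ^ n" unfolding X_def by (simp add: card_len)
  have Gb: "(\<Sum>c\<in>{c::'x list. length c = n}. markov_prob PXZ1 Wc (shf y c) powr (1 - s)) \<le> lam ^ n' * D"
    if y: "length y = n" for y
  proof -
    obtain b y' where yy: "y = b # y'" "length y' = n'" using y nn by (cases y) auto
    obtain x z where b: "b = (x, z)" by (cases b)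
    have "(\<Sum>c\<in>{c::'x list. length c = n}. markov_prob PXZ1 Wc (shf y c) powr (1 - s))
       = (\<Sum>t\<in>UNIV. PXZ1 (x - t, z) powr (1 - s) * (\<Sum>c\<in>{c. length c = n'}. chain Wc (x - t, z) (shf y' c) powr (1 - s)))"
      unfolding nn yy b by (rule G_top[OF Wn Pn])
    also have "\<dots> \<le> (\<Sum>t\<in>UNIV. PXZ1 (x - t, z) powr (1 - s) * (lam ^ n' * v (x - t)))"
    proof (rule sum_mono, rule mult_left_mono)
      fix t
      show "(\<Sum>c\<in>{c. length c = n'}. chain Wc (x - t, z) (shf y' c) powr (1 - s)) \<le> lam ^ n' * v (x - t)"
      proof -
        have l: "leig (\<lambda>x x'. Wc (x, z0) (x', z0) powr (1 - s)) lam v"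
          using pf(1) unfolding lam_def v_def Bx_def .
        have "(\<Sum>c\<in>{c. length c = n'}. chain Wc (x - t, z) (shf y' c) powr (1 - s)) \<le> lam ^ n' * v (fst (x - t, z))"
          by (rule Gchain_ii[OF zz Wn l _ lam0 yy(2)]) (use pf(3) in \<open>simp add: v_def\<close>)
        then show ?thesis by simp
      qed
    qed simp
    also have "\<dots> = (\<Sum>t\<in>UNIV. PXZ1 (t, z) powr (1 - s) * (lam ^ n' * v t))"
      by (rule sum_minus_reindex[of "\<lambda>t. PXZ1 (t, z) powr (1 - s) * (lam ^ n' * v t)"])
    also have "\<dots> = lam ^ n' * D"
      unfolding D_def dotp_def using zz[of z] by (simp add: sum_distrib_left algebra_simps)
    finally show ?thesis .
  qed
  have "(\<Sum>y\<in>{y. length y = n}. ((\<Sum>c\<in>{c::'x list. length c = n}. markov_prob PXZ1 Wc (shf y c) powr (1 - s))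
            / card {c::'x list. length c = n}) powr p)
      \<le> (\<Sum>y\<in>{y::('x \<times> 'z) list. length y = n}. (lam ^ n' * D / X ^ n) powr p)"
  proof (rule sum_mono)
    fix y :: "('x \<times> 'z) list" assume "y \<in> {y. length y = n}"
    then have y: "length y = n" by simp
    show "((\<Sum>c\<in>{c::'x list. length c = n}. markov_prob PXZ1 Wc (shf y c) powr (1 - s))
            / card {c::'x list. length c = n}) powr p \<le> (lam ^ n' * D / X ^ n) powr p"
      unfolding cardC
      by (rule powr_mono2) (use p0 Gb[OF y] X0 in \<open>auto intro!: sum_nonneg divide_right_mono divide_nonneg_pos\<close>)
  qed
  also have "\<dots> = X ^ n * (lam ^ n' * D / X ^ n) powr p"
  proof -
    have "card {y::('x \<times> 'z) list. length y = n} = CARD('x \<times> 'z) ^ n" by (rule card_len)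
    moreover have "CARD('x \<times> 'z) = CARD('x)" using z1 by simp
    ultimately show ?thesis unfolding X_def by simp
  qed
  finally show ?thesis unfolding X_def lam_def v_def D_def p_def Bx_def z0_def nn by simp
qed

lemma pf_root_cases:
  fixes A :: "'a::finite \<Rightarrow> 'a \<Rightarrow> real"
  assumes A: "\<And>a b. 0 \<le> A a b"
  shows "pf_root A = The (\<lambda>r::real. False) \<or> (\<exists>v. leig A (pf_root A) v)"
proof (cases "\<exists>r v. leig A r v")
  case True
  then obtain r v where l: "leig A r v" by blast
  then show ?thesis using pf_root_eq[OF A l] by auto
next
  case False
  then have "(\<lambda>r. \<exists>v. (\<forall>i. 0 < v i) \<and> (\<forall>j. (\<Sum>i\<in>UNIV. v i * A i j) = r * v j)) = (\<lambda>r. False)"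
    by (auto simp: leig_def fun_eq_iff)
  then show ?thesis unfolding pf_root_def by simp
qed

lemma ln_pf_root_le:
  fixes A :: "'a::finite \<Rightarrow> 'a \<Rightarrow> real"
  assumes A: "\<And>a b. 0 \<le> A a b" and A1: "\<And>a b. A a b \<le> 1"
  shows "ln (pf_root A) \<le> max (ln (real CARD('a))) (ln (The (\<lambda>r::real. False)))"
proof -
  consider "pf_root A = The (\<lambda>r::real. False)" | v where "leig A (pf_root A) v"
    using pf_root_cases[of A] A by blast
  then show ?thesis
  proof cases
    case 1 then show ?thesis by simp
  next
    case 2
    define r where "r = pf_root A"
    have l: "leig A r v" using 2 unfolding r_def .
    have pos: "\<And>i. 0 < v i" using l by (simp add: leig_def)
    obtain j where j: "\<forall>i. v i \<le> v j" using ex_argmax[of v] by blast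
    have "r * v j = (\<Sum>i\<in>UNIV. v i * A i j)" using l by (simp add: leig_def)
    also have "\<dots> \<le> (\<Sum>i\<in>(UNIV::'a set). v j)"
    proof (rule sum_mono)
      fix i
      have "v i * A i j \<le> v i * 1" using A1 pos[of i] by (intro mult_left_mono) (auto simp: less_imp_le)
      moreover have "v i \<le> v j" using j by blast
      ultimately show "v i * A i j \<le> v j" by simp
    qed
    also have "\<dots> = real CARD('a) * v j" by simp
    finally have "r * v j \<le> real CARD('a) * v j" .
    then have rle: "r \<le> real CARD('a)" using pos[of j] by simp
    have "0 \<le> (\<Sum>i\<in>UNIV. v i * A i j)" using A pos by (intro sum_nonneg) (simp add: less_imp_le)
    then have "0 \<le> r * v j" using l by (simp add: leig_def)
    then have r0: "0 \<le> r" using pos[of j] by (simp add: zero_le_mult_iff)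
    have "ln r \<le> ln (real CARD('a))"
    proof (cases "r = 0")
      case True then show ?thesis by simp
    next
      case False then show ?thesis using r0 rle by simp
    qed
    then show ?thesis unfolding r_def by simp
  qed
qed

lemma H_bdd:
  fixes Wc :: "'x::{finite,ab_group_add} \<times> 'z::finite \<Rightarrow> 'x \<times> 'z \<Rightarrow> real"
  assumes W: "stochastic Wc" and t: "0 < t" "t < 1"
  shows "bdd_above ((\<lambda>V. H_cond_V Wc V t) ` {V. admissible_V Wc V})"
proof (rule bdd_aboveI2)
  fix V assume "V \<in> {V. admissible_V Wc V}"
  then have V: "stochastic V" by (simp add: admissible_V_def)
  define M where "M = (\<lambda>(x::'x, z::'z) (x', z'). Wc (x, z) (x', z') powr (1 - t) * V z z' powr t)"
  have Mn: "0 \<le> M a b" for a b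
    unfolding M_def by (cases a; cases b) simp
  have M1: "M a b \<le> 1" for a b
  proof -
    obtain x z x' z' where ab: "a = (x, z)" "b = (x', z')" by (cases a; cases b)
    have "Wc (x, z) (x', z') powr (1 - t) \<le> 1"
      by (rule powr_le1) (use t stoch_nonneg[OF W] stoch_le1[OF W] in auto)
    moreover have "V z z' powr t \<le> 1"
      by (rule powr_le1) (use t stoch_nonneg[OF V] stoch_le1[OF V] in auto)
    ultimately show ?thesis unfolding M_def ab by (simp add: mult_le_one)
  qed
  have "ln (pf_root M) \<le> max (ln (real CARD('x \<times> 'z))) (ln (The (\<lambda>r::real. False)))"
    by (rule ln_pf_root_le[OF Mn M1])
  then show "H_cond_V Wc V t \<le> 1 / t * max (ln (real CARD('x \<times> 'z))) (ln (The (\<lambda>r::real. False)))"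
    unfolding H_cond_V_def M_def[symmetric] using t by (intro mult_left_mono) auto
qed

lemma sum_pair:
  fixes f :: "'x::finite \<times> 'z::finite \<Rightarrow> real"
  shows "(\<Sum>b\<in>UNIV. f b) = (\<Sum>z\<in>UNIV. \<Sum>x\<in>UNIV. f (x, z))"
proof -
  have "(\<Sum>b\<in>(UNIV::('x \<times> 'z) set). f b) = (\<Sum>x\<in>UNIV. \<Sum>z\<in>UNIV. f (x, z))"
    unfolding UNIV_Times_UNIV[symmetric] sum.cartesian_product by (rule sum.cong) auto
  then show ?thesis by (simp add: sum.swap[of _ "UNIV::'z set"])
qed

lemma term_id:
  fixes a k l b s :: real
  assumes "0 < a" "0 \<le> k" "0 < l" "0 < b" "0 < s" "s < 1"
  shows "a powr (1 - s) * (a * k / (l * b)) powr s * k powr (1 - s) = a * k / (l powr s * b powr s)"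
proof (cases "k = 0")
  case True then show ?thesis by simp
next
  case False
  then have kp: "0 < k" using assms by simp
  have "(a * k / (l * b)) powr s = a powr s * k powr s / (l powr s * b powr s)"
    using assms kp by (simp add: powr_divide powr_mult)
  moreover have "a powr (1 - s) * a powr s = a" using assms by (simp add: powr_add[symmetric])
  moreover have "k powr s * k powr (1 - s) = k" using kp by (simp add: powr_add[symmetric])
  ultimately show ?thesis by (simp add: field_simps)
    (metis (no_types, opaque_lifting) mult.assoc mult.commute)
qed

lemma H_up_lower_i:
  fixes Wc :: "'x::{finite,ab_group_add} \<times> 'z::finite \<Rightarrow> 'x \<times> 'z \<Rightarrow> real"
  assumes a2: "assm2_i Wc" and W: "irr_aper_chain Wc" and s: "0 < s" "s < 1"
  shows "(1 - s) * ln (pf_root (K_mat Wc s)) \<le> s * H_up Wc s"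
proof -
  have Wst: "stochastic Wc" using W by (simp add: irr_aper_chain_def)
  have Wn: "\<And>a b. 0 \<le> Wc a b" using Wst stoch_nonneg by blast
  define K where "K = K_mat Wc s"
  have Kn: "\<And>a b. 0 \<le> K a b" unfolding K_def K_mat_eq by simp
  have irrK: "irred K" unfolding K_def
    by (rule irred_K[OF a2 Wn s(2)]) (use W in \<open>simp add: irr_aper_chain_def\<close>)
  note pf = pf_package[OF Kn irrK]
  define lam where "lam = pf_root K"
  define v where "v = pf_vec K"
  have lam0: "0 < lam" using pf(2) unfolding lam_def .
  have vpos: "\<And>z. 0 < v z" using pf(3) unfolding v_def by (meson less_le_trans zero_less_one)
  have ev: "\<And>z'. (\<Sum>z\<in>UNIV. v z * K z z') = lam * v z'"
    using pf(1) unfolding leig_def lam_def v_def by blast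
  define V where "V z z' = v z * K z z' / (lam * v z')" for z z'
  have Vn: "0 \<le> V z z'" for z z'
  proof -
    have "0 \<le> v z * K z z'" using vpos[of z] Kn[of z z'] by simp
    moreover have "0 < lam * v z'" using vpos[of z'] lam0 by simp
    ultimately show ?thesis unfolding V_def by simp
  qed
  have KpK: "Kp Wc s z z' = K z z' powr (1 - s)" for z z'
  proof -
    have "K z z' powr (1 - s) = Kp Wc s z z' powr (1 / (1 - s) * (1 - s))"
      unfolding K_def K_mat_eq by (simp add: powr_powr)
    also have "\<dots> = Kp Wc s z z'" using s Kp_nonneg[of Wc s z z'] by simp
    finally show ?thesis by simp
  qed
  have adm: "admissible_V Wc V"
    unfolding admissible_V_def
  proof (intro conjI allI impI)
    show "stochastic V"
      unfolding stochastic_def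
    proof (intro conjI allI)
      fix a b show "0 \<le> V a b" by (rule Vn)
    next
      fix b
      have "(\<Sum>a\<in>UNIV. V a b) = (\<Sum>a\<in>UNIV. v a * K a b) / (lam * v b)"
        unfolding V_def by (simp add: sum_divide_distrib)
      also have "\<dots> = 1" using ev[of b] lam0 vpos[of b] by simp
      finally show "(\<Sum>a\<in>UNIV. V a b) = 1" .
    qed
  next
    fix z z' assume "0 < WcZ Wc z z'"
    have "\<exists>x. 0 < Wc (x, z) (0, z')"
    proof (rule ccontr)
      assume "\<not> (\<exists>x. 0 < Wc (x, z) (0, z'))"
      then have "\<forall>x. Wc (x, z) (0, z') = 0" using Wn by (meson not_less order_antisym)
      then have "WcZ Wc z z' = 0" unfolding WcZ_def by simp
      then show False using \<open>0 < WcZ Wc z z'\<close> by simp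
    qed
    then obtain x where "0 < Wc (x, z) (0, z')" by blast
    then have "0 < Kp Wc s z z'" by (rule Kp_pos[OF a2 Wn s(2)])
    then have "0 < K z z'" unfolding K_def K_mat_eq by simp
    then show "0 < V z z'" unfolding V_def using vpos lam0 by simp
  qed
  define M where "M = (\<lambda>(x::'x, z::'z) (x', z'). Wc (x, z) (x', z') powr (1 - s) * V z z' powr s)"
  have Mn: "0 \<le> M a b" for a b unfolding M_def by (cases a; cases b) simp
  define u where "u b = v (snd b) powr (1 - s)" for b :: "'x \<times> 'z"
  have lM: "leig M (lam powr (1 - s)) u"
    unfolding leig_def
  proof (intro conjI allI)
    fix i show "0 < u i" unfolding u_def using vpos[of "snd i"] by simp
  next
    fix j :: "'x \<times> 'z"
    obtain x' z' where j: "j = (x', z')" by (cases j)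
    have "(\<Sum>i\<in>UNIV. u i * M i j) = (\<Sum>z\<in>UNIV. \<Sum>x\<in>UNIV. u (x, z) * M (x, z) j)"
      by (rule sum_pair)
    also have "\<dots> = (\<Sum>z\<in>UNIV. \<Sum>x\<in>UNIV. v z powr (1 - s) * (Wc (x, z) (x', z') powr (1 - s) * V z z' powr s))"
      unfolding u_def M_def j by simp
    also have "\<dots> = (\<Sum>z\<in>UNIV. v z powr (1 - s) * V z z' powr s * Kp Wc s z z')"
    proof (rule sum.cong[OF refl])
      fix z
      have "(\<Sum>x\<in>UNIV. v z powr (1 - s) * (Wc (x, z) (x', z') powr (1 - s) * V z z' powr s))
          = v z powr (1 - s) * V z z' powr s * (\<Sum>x\<in>UNIV. Wc (x, z) (x', z') powr (1 - s))"
        by (simp add: sum_distrib_left algebra_simps)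
      also have "(\<Sum>x\<in>UNIV. Wc (x, z) (x', z') powr (1 - s)) = Kp Wc s z z'"
        unfolding Kp_def by (rule assm2_sum[OF a2 s(2)])
      finally show "(\<Sum>x\<in>UNIV. v z powr (1 - s) * (Wc (x, z) (x', z') powr (1 - s) * V z z' powr s))
          = v z powr (1 - s) * V z z' powr s * Kp Wc s z z'" .
    qed
    also have "\<dots> = (\<Sum>z\<in>UNIV. v z * K z z' / (lam powr s * v z' powr s))"
      unfolding KpK V_def using vpos lam0 Kn s by (intro sum.cong refl term_id) auto
    also have "\<dots> = (lam * v z') / (lam powr s * v z' powr s)"
      using ev[of z'] by (simp add: sum_divide_distrib[symmetric])
    also have "\<dots> = lam powr (1 - s) * u j"
      unfolding u_def j using lam0 vpos[of z'] by (simp add: powr_diff powr_mult)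
    finally show "(\<Sum>i\<in>UNIV. u i * M i j) = lam powr (1 - s) * u j" .
  qed
  have root: "pf_root M = lam powr (1 - s)" by (rule pf_root_eq[OF Mn lM])
  have Hc: "H_cond_V Wc V s = 1 / s * ((1 - s) * ln lam)"
    unfolding H_cond_V_def M_def[symmetric] root using lam0 by (simp add: ln_powr)
  have "H_cond_V Wc V s \<le> H_up Wc s"
    unfolding H_up_def by (rule cSUP_upper) (use adm H_bdd[OF Wst s] in auto)
  then have "s * (1 / s * ((1 - s) * ln lam)) \<le> s * H_up Wc s"
    using Hc s by (intro mult_left_mono) auto
  then show ?thesis using s unfolding lam_def K_def by simp
qed

lemma irred_Bx:
  fixes Wc :: "'x::{finite,ab_group_add} \<times> 'z::finite \<Rightarrow> 'x \<times> 'z \<Rightarrow> real"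
  assumes zz: "\<And>z::'z. z = z0" and W: "irr_aper_chain Wc" and s: "s < 1"
  shows "irred (\<lambda>x x'. Wc (x, z0) (x', z0) powr (1 - s))"
  unfolding irred_def
proof (intro allI)
  define Bx where "Bx = (\<lambda>x x'. Wc (x, z0) (x', z0) powr (1 - s))"
  fix x x' :: 'x
  have edge: "(fst a, fst b) \<in> step_rel Bx" if "(a, b) \<in> step_rel Wc" for a b
  proof -
    have "a = (fst a, z0)" "b = (fst b, z0)" using zz by (auto intro: prod_eqI)
    then have "Wc (fst b, z0) (fst a, z0) > 0" using that by (simp add: step_rel_def)
    then show ?thesis unfolding step_rel_def Bx_def by simp
  qed
  have "((x, z0), (x', z0)) \<in> (step_rel Wc)\<^sup>+" using W by (simp add: irr_aper_chain_def irreducible_mat_def)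
  from trancl_map[of "step_rel Wc" fst "step_rel Bx", OF edge this]
  show "(x, x') \<in> (step_rel (\<lambda>x x'. Wc (x, z0) (x', z0) powr (1 - s)))\<^sup>+" by (simp add: Bx_def)
qed

lemma H_up_ii:
  fixes Wc :: "'x::{finite,ab_group_add} \<times> 'z::finite \<Rightarrow> 'x \<times> 'z \<Rightarrow> real"
  assumes z1: "CARD('z) = 1" and W: "irr_aper_chain Wc" and s: "0 < s" "s < 1"
  shows "s * H_up Wc s = ln (pf_root (\<lambda>x x'. Wc (x, undefined) (x', undefined) powr (1 - s)))"
proof -
  define z0 :: 'z where "z0 = undefined"
  have zz: "\<And>z::'z. z = z0" using card1_all_eq[OF z1] by blast
  have UZ: "(UNIV::'z set) = {z0}" using zz by auto
  have Wst: "stochastic Wc" using W by (simp add: irr_aper_chain_def)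
  have Wn: "\<And>a b. 0 \<le> Wc a b" using Wst stoch_nonneg by blast
  define Bx where "Bx = (\<lambda>x x'. Wc (x, z0) (x', z0) powr (1 - s))"
  have Bn: "\<And>a b. 0 \<le> Bx a b" unfolding Bx_def by simp
  have irrB: "irred Bx" unfolding Bx_def by (rule irred_Bx[OF zz W s(2)])
  note pf = pf_package[OF Bn irrB]
  define lam where "lam = pf_root Bx"
  define v where "v = pf_vec Bx"
  have lam0: "0 < lam" using pf(2) unfolding lam_def .
  have vpos: "\<And>x. 0 < v x" using pf(3) unfolding v_def by (meson less_le_trans zero_less_one)
  define V1 :: "'z \<Rightarrow> 'z \<Rightarrow> real" where "V1 = (\<lambda>_ _. 1)"
  have adm_eq: "{V. admissible_V Wc V} = {V1}"
  proof (intro set_eqI iffI)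
    fix V assume "V \<in> {V. admissible_V Wc V}"
    then have "stochastic V" by (simp add: admissible_V_def)
    then have "(\<Sum>a\<in>UNIV. V a z0) = 1" by (simp add: stochastic_def)
    then have "V z0 z0 = 1" unfolding UZ by simp
    then have "V = V1" unfolding V1_def using zz by (metis)
    then show "V \<in> {V1}" by simp
  next
    fix V assume "V \<in> {V1}"
    then have V: "V = V1" by simp
    have "stochastic V1" unfolding stochastic_def V1_def using z1 by simp
    then show "V \<in> {V. admissible_V Wc V}" unfolding V admissible_V_def V1_def by simp
  qed
  define M where "M = (\<lambda>(x::'x, z::'z) (x', z'). Wc (x, z) (x', z') powr (1 - s) * V1 z z' powr s)"
  have Mn: "0 \<le> M a b" for a b unfolding M_def by (cases a; cases b) simp
  define u where "u b = v (fst b)" for b :: "'x \<times> 'z"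
  have lM: "leig M lam u"
    unfolding leig_def
  proof (intro conjI allI)
    fix i show "0 < u i" unfolding u_def using vpos[of "fst i"] by simp
  next
    fix j :: "'x \<times> 'z"
    obtain x' z' where j: "j = (x', z')" by (cases j)
    have "(\<Sum>i\<in>UNIV. u i * M i j) = (\<Sum>z\<in>UNIV. \<Sum>x\<in>UNIV. u (x, z) * M (x, z) j)"
      by (rule sum_pair)
    also have "\<dots> = (\<Sum>x\<in>UNIV. v x * Bx x x')"
      unfolding UZ u_def M_def j Bx_def V1_def using zz[of z'] by simp
    also have "\<dots> = lam * u j" using pf(1) unfolding leig_def lam_def v_def u_def j by simp
    finally show "(\<Sum>i\<in>UNIV. u i * M i j) = lam * u j" .
  qed
  have root: "pf_root M = lam" by (rule pf_root_eq[OF Mn lM])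
  have "H_up Wc s = H_cond_V Wc V1 s" unfolding H_up_def adm_eq by simp
  also have "\<dots> = 1 / s * ln lam" unfolding H_cond_V_def M_def[symmetric] root ..
  finally show ?thesis using s unfolding lam_def Bx_def z0_def by simp
qed

lemma lp_ge:
  fixes a :: "'i \<Rightarrow> real"
  assumes I: "finite I" and a: "\<And>i. 0 \<le> a i" and sg: "0 < \<sigma>" "\<sigma> \<le> 1"
  shows "(\<Sum>i\<in>I. a i) \<le> (\<Sum>i\<in>I. a i powr \<sigma>) powr (1 / \<sigma>)"
proof -
  define A where "A = (\<Sum>i\<in>I. a i)"
  have A0: "0 \<le> A" unfolding A_def using a by (simp add: sum_nonneg)
  show ?thesis
  proof (cases "A = 0")
    case True then show ?thesis unfolding A_def[symmetric] by simp
  next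
    case False
    then have Ap: "0 < A" using A0 by simp
    have le1: "a i / A \<le> (a i / A) powr \<sigma>" if "i \<in> I" for i
    proof -
      have "a i \<le> A" unfolding A_def by (rule member_le_sum) (use that a I in auto)
      then have x1: "a i / A \<le> 1" using Ap by simp
      have x0: "0 \<le> a i / A" using a Ap by simp
      show ?thesis
      proof (cases "a i = 0")
        case True then show ?thesis by simp
      next
        case False
        then have "0 < a i / A" using a[of i] Ap by simp
        then have "(a i / A) powr 1 \<le> (a i / A) powr \<sigma>" by (intro powr_mono') (use sg x1 in auto)
        moreover have "(a i / A) powr 1 = a i / A" by (rule powr_one[OF x0])
        ultimately show ?thesis by linarith
      qed
    qed
    have "1 = (\<Sum>i\<in>I. a i / A)" using Ap unfolding A_def by (simp add: sum_divide_distrib[symmetric])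
    also have "\<dots> \<le> (\<Sum>i\<in>I. (a i / A) powr \<sigma>)" by (rule sum_mono) (rule le1)
    also have "\<dots> = (\<Sum>i\<in>I. a i powr \<sigma>) / A powr \<sigma>"
      using a Ap by (simp add: powr_divide sum_divide_distrib)
    finally have "A powr \<sigma> \<le> (\<Sum>i\<in>I. a i powr \<sigma>)" using Ap by (simp add: field_simps)
    then have "(A powr \<sigma>) powr (1 / \<sigma>) \<le> (\<Sum>i\<in>I. a i powr \<sigma>) powr (1 / \<sigma>)"
      by (intro powr_mono2) (use sg in auto)
    also have "(A powr \<sigma>) powr (1 / \<sigma>) = A" using sg Ap by (simp add: powr_powr)
    finally show ?thesis unfolding A_def .
  qed
qed

lemma dotp_pos:
  fixes v w :: "'a::finite \<Rightarrow> real"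
  assumes "\<And>i. 1 \<le> v i" "\<And>i. 0 \<le> w i" "0 < w j"
  shows "0 < dotp v w"
proof -
  have "v j * w j \<le> dotp v w" unfolding dotp_def
    by (rule member_le_sum) (use assms in \<open>auto intro: mult_nonneg_nonneg order_trans[OF zero_le_one]\<close>)
  moreover have "0 < v j * w j" using assms(1)[of j] assms(3) by simp
  ultimately show ?thesis by simp
qed

lemma prob_vec_pos:
  fixes P :: "'a::finite \<Rightarrow> real"
  assumes "prob_vec P" shows "\<exists>j. 0 < P j"
proof (rule ccontr)
  assume "\<not> ?thesis"
  then have "\<forall>j. P j = 0" using assms unfolding prob_vec_def by (meson not_less order_antisym)
  then show False using assms unfolding prob_vec_def by simp
qed

lemma exp_form:
  assumes "0 < a" "0 < b" shows "a ^ m * b = exp (real m * ln a + ln b)"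
  using assms by (simp add: exp_add ln_realpow[symmetric])

lemma powr_exp: "exp (c::real) powr p = exp (p * c)"
  by (simp add: powr_def)

theorem mainTheorem11:
  fixes PM1 :: "'m::finite \<Rightarrow> real" and Ws :: "'m \<Rightarrow> 'm \<Rightarrow> real"
    and PXZ1 :: "'x::{finite,ab_group_add} \<times> 'z::finite \<Rightarrow> real"
    and Wc :: "'x \<times> 'z \<Rightarrow> 'x \<times> 'z \<Rightarrow> real"
    and k n :: nat
  assumes "prob_vec PM1" and "irr_aper_chain Ws"
    and "prob_vec PXZ1" and "irr_aper_chain Wc"
    and "assm2 Wc"
    and "2 \<le> k" and "2 \<le> n"
  shows "\<forall>s\<in>{0<..1/2::real}.
           Pj PM1 Ws PXZ1 Wc k n \<le>
           exp ((- real n * s * ln (real CARD('x))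
                  + (real n - 1) * U_up Ws Wc ((real k - 1) / (real n - 1)) s) / (1 - s)
                + (xi_s PM1 Ws s + xi_c PXZ1 Wc s) / (1 - s))"
proof (intro ballI)
  note PM = assms(1) and WS = assms(2) and PX = assms(3) and WC = assms(4) and A2 = assms(5)
    and k2 = assms(6) and n2 = assms(7)
  fix s :: real assume "s \<in> {0<..1/2}"
  then have s: "0 < s" "s \<le> 1/2" by auto
  have s1: "s < 1" using s by simp
  define p where "p = 1 / (1 - s)"
  have p1: "1 \<le> p" unfolding p_def using s by (simp add: field_simps)
  have p0: "0 < p" using p1 by simp
  define X where "X = real CARD('x)"
  have X0: "0 < X" unfolding X_def by simp
  have Wsn: "\<And>a b. 0 \<le> Ws a b" using WS stoch_nonneg unfolding irr_aper_chain_def by blast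
  have Wcn: "\<And>a b. 0 \<le> Wc a b" using WC stoch_nonneg unfolding irr_aper_chain_def by blast
  have PMn: "\<And>a. 0 \<le> PM1 a" using PM unfolding prob_vec_def by blast
  have PXn: "\<And>a. 0 \<le> PXZ1 a" using PX unfolding prob_vec_def by blast
  define Mk where "Mk = {ms::'m list. length ms = k}"
  define Cn where "Cn = {c::'x list. length c = n}"
  define Yn where "Yn = {ys::('x \<times> 'z) list. length ys = n}"
  define P where "P = markov_prob PM1 Ws"
  define Q where "Q c ys = markov_prob PXZ1 Wc (shf ys c)" for c ys
  have Pn: "\<And>m. 0 \<le> P m" unfolding P_def by (rule markov_prob_nonneg[OF PMn Wsn])
  have Qn: "\<And>c y. 0 \<le> Q c y" unfolding Q_def by (rule markov_prob_nonneg[OF PXn Wcn])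
  have Mkfin: "finite Mk" unfolding Mk_def by (rule finite_len)
  have Mkne: "Mk \<noteq> {}" unfolding Mk_def
  proof -
    have "replicate k undefined \<in> {ms::'m list. length ms = k}" by simp
    then show "{ms::'m list. length ms = k} \<noteq> {}" by blast
  qed
  have Cnfin: "finite Cn" unfolding Cn_def by (rule finite_len)
  have Cnne: "Cn \<noteq> {}" unfolding Cn_def
  proof -
    have "replicate n 0 \<in> {c::'x list. length c = n}" by simp
    then show "{c::'x list. length c = n} \<noteq> {}" by blast
  qed
  have Ynfin: "finite Yn" unfolding Yn_def by (rule finite_len)
  define S' where "S' = (\<Sum>m\<in>Mk. P m powr (1 - s))"
  define T' where "T' = (\<Sum>y\<in>{y. length y = n}. ((\<Sum>c\<in>{c::'x list. length c = n}. markov_prob PXZ1 Wc (shf y c) powr (1 - s))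
            / card {c::'x list. length c = n}) powr (1 / (1 - s)))"
  obtain e d where e: "e \<in> PiE Mk (\<lambda>_. Cn)"
    and ed: "(\<Sum>m\<in>Mk. P m * (\<Sum>y\<in>Yn. Q (e m) y * (if d y \<noteq> m then 1 else 0))) \<le> S' powr p * T'"
  proof -
    from gallager[where A=Mk and C=Cn and Y=Yn and P=P and Q=Q and s=s, OF Mkfin Mkne Cnfin Cnne Ynfin Pn Qn s(1) s(2)]
    obtain e d where "e \<in> PiE Mk (\<lambda>_. Cn)"
      "(\<Sum>m\<in>Mk. P m * (\<Sum>y\<in>Yn. Q (e m) y * (if d y \<noteq> m then 1 else 0)))
     \<le> (\<Sum>m\<in>Mk. P m powr (1 - s)) powr (1 / (1 - s))
        * (\<Sum>y\<in>Yn. ((\<Sum>c\<in>Cn. Q c y powr (1 - s)) / card Cn) powr (1 / (1 - s)))" by blast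
    moreover have "(\<Sum>m\<in>Mk. P m powr (1 - s)) powr (1 / (1 - s))
        * (\<Sum>y\<in>Yn. ((\<Sum>c\<in>Cn. Q c y powr (1 - s)) / card Cn) powr (1 / (1 - s))) = S' powr p * T'"
      unfolding S'_def T'_def p_def Yn_def Cn_def Q_def ..
    ultimately show ?thesis using that by simp
  qed
  have ce: "code_error PM1 Ws PXZ1 Wc k n e d = (\<Sum>m\<in>Mk. P m * (\<Sum>y\<in>Yn. Q (e m) y * (if d y \<noteq> m then 1 else 0)))"
    unfolding code_error_def Mk_def Yn_def P_def Q_def shf_def ..
  have Pj_le: "Pj PM1 Ws PXZ1 Wc k n \<le> code_error PM1 Ws PXZ1 Wc k n e d"
    unfolding Pj_def
  proof (rule cInf_lower)
    have "\<forall>ms. length ms = k \<longrightarrow> length (e ms) = n"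
      using e unfolding Mk_def Cn_def by (auto dest: PiE_mem)
    then show "code_error PM1 Ws PXZ1 Wc k n e d \<in> {code_error PM1 Ws PXZ1 Wc k n e d |e d.
            \<forall>ms. length ms = k \<longrightarrow> length (e ms) = n}" by blast
    show "bdd_below {code_error PM1 Ws PXZ1 Wc k n e d |e d. \<forall>ms. length ms = k \<longrightarrow> length (e ms) = n}"
    proof (rule bdd_belowI[of _ 0])
      fix x assume "x \<in> {code_error PM1 Ws PXZ1 Wc k n e d |e d. \<forall>ms. length ms = k \<longrightarrow> length (e ms) = n}"
      then obtain e' d' where x: "x = code_error PM1 Ws PXZ1 Wc k n e' d'" by blast
      show "0 \<le> x" unfolding x code_error_def
        by (intro sum_nonneg mult_nonneg_nonneg markov_prob_nonneg[OF PMn Wsn] markov_prob_nonneg[OF PXn Wcn]) auto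
    qed
  qed
  have AsE: "As Ws s = (\<lambda>a b. Ws a b powr (1 - s))" by (simp add: As_def[abs_def])
  have An: "\<And>a b. 0 \<le> As Ws s a b" by (simp add: As_def)
  have irrAs: "irred (As Ws s)" unfolding AsE
    by (rule irred_powr[OF Wsn]) (use s1 WS in \<open>auto simp: irr_aper_chain_def\<close>)
  note pfs = pf_package[OF An irrAs]
  define Ds where "Ds = dotp (pf_vec (As Ws s)) (\<lambda>m. PM1 m powr (1 - s))"
  have Ds0: "0 < Ds"
  proof -
    obtain j where "0 < PM1 j" using prob_vec_pos[OF PM] by blast
    then show ?thesis unfolding Ds_def by (intro dotp_pos[of _ _ j]) (use pfs(3) in auto)
  qed
  have S'le: "S' \<le> pf_root (As Ws s) ^ (k - 1) * Ds"
    unfolding S'_def Mk_def P_def Ds_def by (rule source_bound[OF PM WS s(1) s1]) (use k2 in simp)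
  define E1 where "E1 = p * (real (k - 1) * thetaH_s Ws s + xi_s PM1 Ws s)"
  have SB: "S' powr p \<le> exp E1"
  proof -
    have S'0: "0 \<le> S'" unfolding S'_def by (simp add: sum_nonneg)
    have "S' \<le> exp (real (k - 1) * thetaH_s Ws s + xi_s PM1 Ws s)"
      using S'le exp_form[OF pfs(2) Ds0, of "k - 1"] unfolding thetaH_s_def xi_s_def Ds_def by simp
    then have "S' powr p \<le> exp (real (k - 1) * thetaH_s Ws s + xi_s PM1 Ws s) powr p"
      by (intro powr_mono2) (use p0 S'0 in auto)
    then show ?thesis unfolding E1_def powr_exp .
  qed
  define E2 where "E2 = p * (- real n * s * ln X + (real n - 1) * (s * H_up Wc s) + xi_c PXZ1 Wc s)"
  have TB: "T' \<le> exp E2"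
  proof (cases "assm2_i Wc")
    case True
    have Kn: "\<And>a b. 0 \<le> K_mat Wc s a b" unfolding K_mat_eq by simp
    have irrK: "irred (K_mat Wc s)"
      by (rule irred_K[OF True Wcn s1]) (use WC in \<open>simp add: irr_aper_chain_def\<close>)
    note pfk = pf_package[OF Kn irrK]
    define lam where "lam = pf_root (K_mat Wc s)"
    define DK where "DK = dotp (pf_vec (K_mat Wc s)) (\<lambda>z. (\<Sum>x\<in>UNIV. PXZ1 (x, z) powr (1 - s)) powr (1 / (1 - s)))"
    have lam0: "0 < lam" using pfk(2) unfolding lam_def .
    have DK1: "1 \<le> DK"
    proof -
      have "1 = (\<Sum>z\<in>UNIV. \<Sum>x\<in>UNIV. PXZ1 (x, z))" using PX sum_pair[of PXZ1] by (simp add: prob_vec_def)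
      also have "\<dots> \<le> (\<Sum>z\<in>UNIV. (\<Sum>x\<in>UNIV. PXZ1 (x, z) powr (1 - s)) powr (1 / (1 - s)))"
        by (intro sum_mono lp_ge) (use PXn s in auto)
      also have "\<dots> \<le> DK" unfolding DK_def dotp_def
      proof (rule sum_mono)
        fix z
        have "1 * (\<Sum>x\<in>UNIV. PXZ1 (x, z) powr (1 - s)) powr (1 / (1 - s))
            \<le> pf_vec (K_mat Wc s) z * (\<Sum>x\<in>UNIV. PXZ1 (x, z) powr (1 - s)) powr (1 / (1 - s))"
          by (rule mult_right_mono) (use pfk(3) in auto)
        then show "(\<Sum>x\<in>UNIV. PXZ1 (x, z) powr (1 - s)) powr (1 / (1 - s))
            \<le> pf_vec (K_mat Wc s) z * (\<Sum>x\<in>UNIV. PXZ1 (x, z) powr (1 - s)) powr (1 / (1 - s))" by simp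
      qed
      finally show ?thesis .
    qed
    have DK0: "0 < DK" using DK1 by simp
    have xic: "xi_c PXZ1 Wc s = ln DK" unfolding xi_c_def DK_def using True by simp
    have Hl: "(1 - s) * ln lam \<le> s * H_up Wc s" unfolding lam_def by (rule H_up_lower_i[OF True WC s(1) s1])
    have "T' \<le> X ^ n / X powr (real n / (1 - s)) * lam ^ (n - 1) * DK"
      unfolding T'_def X_def lam_def DK_def by (rule chan_i[OF True WC PX s(1) s1]) (use n2 in simp)
    also have "\<dots> = exp (real n * ln X - real n / (1 - s) * ln X + real (n - 1) * ln lam + ln DK)"
    proof -
      have "X ^ n = exp (real n * ln X)" using X0 by (simp add: ln_realpow[symmetric])
      moreover have "X powr (real n / (1 - s)) = exp (real n / (1 - s) * ln X)" using X0 by (simp add: powr_def)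
      moreover have "lam ^ (n - 1) = exp (real (n - 1) * ln lam)" using lam0 by (simp add: ln_realpow[symmetric])
      moreover have "DK = exp (ln DK)" using DK0 by simp
      ultimately show ?thesis by (simp add: exp_add exp_diff)
    qed
    also have "\<dots> \<le> exp E2"
    proof -
      have nn: "real (n - 1) = real n - 1" using n2 by simp
      have a: "real n * ln X - real n / (1 - s) * ln X = p * (- real n * s * ln X)"
        unfolding p_def using s1 by (simp add: field_simps)
      have b: "ln lam \<le> p * (s * H_up Wc s)"
        unfolding p_def using Hl s1 by (simp add: field_simps)
      have b': "(real n - 1) * ln lam \<le> (real n - 1) * (p * (s * H_up Wc s))"
        by (rule mult_left_mono[OF b]) (use n2 in simp)
      have c: "ln DK \<le> p * ln DK"
      proof -
        have "0 \<le> ln DK" using DK1 by simp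
        then have "1 * ln DK \<le> p * ln DK" by (rule mult_right_mono[OF p1])
        then show ?thesis by simp
      qed
      have "real n * ln X - real n / (1 - s) * ln X + real (n - 1) * ln lam + ln DK \<le> E2"
        unfolding E2_def xic nn using a b' c by (simp add: algebra_simps)
      then show ?thesis by simp
    qed
    finally show ?thesis .
  next
    case False
    then have z1: "CARD('z) = 1" using A2 by (simp add: assm2_def)
    have zz: "\<And>z::'z. z = undefined" using card1_all_eq[OF z1] by blast
    define Bx where "Bx = (\<lambda>x x'. Wc (x, undefined::'z) (x', undefined) powr (1 - s))"
    have Bn: "\<And>a b. 0 \<le> Bx a b" unfolding Bx_def by simp
    have irrB: "irred Bx" unfolding Bx_def by (rule irred_Bx[OF zz WC s1])
    note pfb = pf_package[OF Bn irrB]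
    define lam where "lam = pf_root Bx"
    define DB where "DB = dotp (pf_vec Bx) (\<lambda>x. PXZ1 (x, undefined) powr (1 - s))"
    have lam0: "0 < lam" using pfb(2) unfolding lam_def .
    have DB0: "0 < DB"
    proof -
      obtain j where j: "0 < PXZ1 j" using prob_vec_pos[OF PX] by blast
      have "j = (fst j, undefined)" using zz[of "snd j"] zz[of undefined] by (metis prod.collapse)
      then have "0 < PXZ1 (fst j, undefined)" using j by simp
      then show ?thesis unfolding DB_def by (intro dotp_pos[of _ _ "fst j"]) (use pfb(3) in auto)
    qed
    have xic: "xi_c PXZ1 Wc s = ln DB" unfolding xi_c_def DB_def Bx_def using False by (simp add: Let_def)
    have Hs: "s * H_up Wc s = ln lam" unfolding lam_def Bx_def by (rule H_up_ii[OF z1 WC s(1) s1])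
    have "T' \<le> X ^ n * (lam ^ (n - 1) * DB / X ^ n) powr p"
      unfolding T'_def X_def lam_def DB_def Bx_def p_def by (rule chan_ii[OF z1 WC PX s(1) s1]) (use n2 in simp)
    also have "\<dots> = exp E2"
    proof -
      have nn: "real (n - 1) = real n - 1" using n2 by simp
      have "lam ^ (n - 1) * DB / X ^ n = exp (real (n - 1) * ln lam + ln DB - real n * ln X)"
        using lam0 DB0 X0 by (simp add: exp_add exp_diff ln_realpow[symmetric])
      then have "X ^ n * (lam ^ (n - 1) * DB / X ^ n) powr p
          = exp (real n * ln X + p * (real (n - 1) * ln lam + ln DB - real n * ln X))"
        using X0 by (simp add: powr_exp exp_add ln_realpow[symmetric])
      also have "real n * ln X + p * (real (n - 1) * ln lam + ln DB - real n * ln X) = E2"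
        unfolding E2_def xic Hs nn p_def using s1 by (simp add: field_simps)
      finally show ?thesis .
    qed
    finally show ?thesis .
  qed
  have T'0: "0 \<le> T'" unfolding T'_def by (simp add: sum_nonneg)
  have "Pj PM1 Ws PXZ1 Wc k n \<le> S' powr p * T'" using Pj_le ce ed by simp
  also have "\<dots> \<le> exp E1 * exp E2" by (rule mult_mono[OF SB TB]) (use T'0 in auto)
  also have "\<dots> = exp (E1 + E2)" by (simp add: exp_add)
  also have "E1 + E2 = (- real n * s * ln (real CARD('x))
                  + (real n - 1) * U_up Ws Wc ((real k - 1) / (real n - 1)) s) / (1 - s)
                + (xi_s PM1 Ws s + xi_c PXZ1 Wc s) / (1 - s)"
  proof -
    have kk: "real (k - 1) = real k - 1" using k2 by simp
    have n1: "real n - 1 \<noteq> 0" using n2 by simp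
    define T where "T = thetaH_s Ws s"
    define H where "H = H_up Wc s"
    have r: "(real n - 1) * ((real k - 1) / (real n - 1) * T) = (real k - 1) * T" using n1 by simp
    have U: "(real n - 1) * U_up Ws Wc ((real k - 1) / (real n - 1)) s = (real k - 1) * T + (real n - 1) * (s * H)"
      unfolding U_up_def T_def[symmetric] H_def[symmetric] distrib_left r ..
    have ns: "1 - s \<noteq> 0" using s1 by simp
    have "E1 + E2 = ((real k - 1) * T + xi_s PM1 Ws s + (- real n * s * ln X + (real n - 1) * (s * H) + xi_c PXZ1 Wc s)) / (1 - s)"
      unfolding E1_def E2_def p_def kk T_def H_def using ns by (simp add: divide_simps)
    also have "\<dots> = (- real n * s * ln X + (real n - 1) * U_up Ws Wc ((real k - 1) / (real n - 1)) s) / (1 - s)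
                + (xi_s PM1 Ws s + xi_c PXZ1 Wc s) / (1 - s)"
      unfolding U using ns by (simp add: divide_simps)
    finally show ?thesis unfolding X_def .
  qed
  finally show "Pj PM1 Ws PXZ1 Wc k n \<le> exp ((- real n * s * ln (real CARD('x))
                  + (real n - 1) * U_up Ws Wc ((real k - 1) / (real n - 1)) s) / (1 - s)
                + (xi_s PM1 Ws s + xi_c PXZ1 Wc s) / (1 - s))" .
qed

end
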